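(* Let $\Xi$ be an orthogonally invariant FQ operation with circular-basis coefficients $\tilde p^{[s]}_{i_1,\dots,i_r}$ ($s=0$ scalar, $s\in\{1,2\}$ vectorial components, $s=12$ pseudoscalar). For a word $w$ over $\{1,2\}$ let $\mathrm{red}\,w$ be its shortest reduction under the rules $11=\lambda$, $22=\lambda$ ($\lambda$ the empty word). Let $\iota=(i_1,\dots,i_r)$ with all $i_j\in\{1,2\}$. If $\mathrm{red}\,\iota\notin\{\lambda,(2)\}$, and moreover either $s\in\{0,12\}$ or $\mathrm{red}\,\iota\notin\{(1),(2,1)\}$, then $\tilde p^{[s]}_{i_1,\dots,i_r}=0$.
   Context: Setting. $(Q_1,Q_2)$ is a Clifford system: $Q_1^2=Q_2^2=-1$, $Q_1Q_2=-Q_2Q_1$. $R_1,R_2$ are formal noncommuting infinitesimal variables; one works in the real algebra generated by $Q_1,Q_2,R_1,R_2$ (free apart from the Clifford relations), completed with respect to total degree in $R_1,R_2$, or in extensions of it by further formal infinitesimal elements. Put $A_i=Q_i+R_i$. For $Q$ with $Q^2=-1$ and any $X$ put $X^0_Q=\frac12(X+Q^{-1}XQ)$, $X^1_Q=\frac12(X-Q^{-1}XQ)$. The split variables are $r_1,\dots,r_8$: for $j\in\{1,2\}$, $\iota_1,\iota_2\in\{0,1\}$, $r_{4(j-1)+2\iota_1+\iota_2+1}=((R_jQ_j^{-1})^{\iota_1}_{Q_1})^{\iota_2}_{Q_2}$. An FQ operation around $(Q_1,Q_2)$ is given by formal real noncommutative power series in eight variables: scalar $\Xi(A_1,A_2)=f_0(r_1,\dots,r_8)$,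 vectorial $\Xi(A_1,A_2)=(f_1(r)Q_1,f_2(r)Q_2)$, pseudoscalar $\Xi(A_1,A_2)=f_{12}(r)Q_1Q_2$; the operation is identified with this family of series. The same series can be evaluated relative to any other Clifford system $(Q_1',Q_2')$ at $(A_1',A_2')$ with $A'_i-Q'_i$ infinitesimal, by forming the split variables of $A_i'-Q_i'$ relative to $(Q'_1,Q'_2)$ and multiplying by $Q'_s$. Mixed basis: $\hat r_1=\frac12(r_2-r_7)$, $\hat r_2=\frac12(r_2+r_7)$, $\hat r_3=\frac12(r_1+r_5)$, $\hat r_4=\frac12(r_1-r_5)$, $\hat r_5=\frac12(r_4-r_8)$, $\hat r_6=\frac12(r_4+r_8)$, $\hat r_7=\frac12(r_3+r_6)$, $\hat r_8=\frac12(r_3-r_6)$. Circular basis: $\tilde r_i=\hat r_i$ for $i\notin\{4,5\}$, $\tilde r_4=\hat r_4+\hat r_5$, $\tilde r_5=\hat r_4-\hat r_5$. Rewriting $f_s$ as a power series in $\tilde r_1,\dots,\tilde r_8$, $\tilde p^{[s]}_{i_1,\dots,i_r}$ is the coefficient of $\tilde r_{i_1}\cdots\tilde r_{i_r}$. Orthogonal invariance: let $t$ be a central formal variable with $t^2=0$ and $\mathrm{Rot}_t(B_1,B_2)=(B_1+tB_2,\,B_2-tB_1)$. A (pseudo)scalar $\Xi$ is orthogonally invariant if $\Xi_{(Q_1,Q_2)}(A_1,A_2)=\Xi_{\mathrm{Rot}_t(Q_1,Q_2)}(\mathrm{Rot}_t(A_1,A_2))$; a vectorial $\Xi$ is orthogonally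 invariant if $\mathrm{Rot}_t(\Xi_{(Q_1,Q_2)}(A_1,A_2))=\Xi_{\mathrm{Rot}_t(Q_1,Q_2)}(\mathrm{Rot}_t(A_1,A_2))$; the subscript indicates the base Clifford system relative to which the series is evaluated. *)

theory Defs
  imports Complex_Main
begin

text \<open>Basis of the Clifford algebra generated by a Clifford system (Q1,Q2):
  E = 1, I = Q1, J = Q2, K = Q1 Q2.  (Q1^2 = Q2^2 = -1, Q1 Q2 = - Q2 Q1.)\<close>
datatype qb = E | I | J | K

fun qmul :: "qb \<Rightarrow> qb \<Rightarrow> real \<times> qb" where
  "qmul E x = (1, x)"
| "qmul x E = (1, x)"
| "qmul I I = (-1, E)"
| "qmul I J = (1, K)"
| "qmul I K = (-1, J)"
| "qmul J I = (-1, K)"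
| "qmul J J = (-1, E)"
| "qmul J K = (1, I)"
| "qmul K I = (1, J)"
| "qmul K J = (-1, I)"
| "qmul K K = (-1, E)"

datatype rlet = RR1 | RR2

text \<open>Normal-form monomials of the algebra generated by Q1,Q2,R1,R2 (free apart from the
  Clifford relations, i.e. the free product of the Clifford algebra with the free algebra
  on R1,R2):  c0 R_{a1} c1 R_{a2} c2 ... R_{an} cn  with ci basis elements of the Clifford
  algebra.  An element of the completion (w.r.t. total degree in R1,R2) is an arbitrary
  real coefficient function on monomials (each degree component is finite dimensional).\<close>
type_synonym mon = "qb \<times> (rlet \<times> qb) list"
type_synonym bel = "mon \<Rightarrow> real"

definition slot :: "mon \<Rightarrow> nat \<Rightarrow> qb" where
  "slot m k = (if k = 0 then fst m else snd (snd m ! (k - 1)))"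

definition pre :: "mon \<Rightarrow> nat \<Rightarrow> qb \<Rightarrow> mon" where
  "pre m k d = (if k = 0 then (d, [])
               else (fst m, take (k - 1) (snd m) @ [(fst (snd m ! (k - 1)), d)]))"

definition suf :: "mon \<Rightarrow> nat \<Rightarrow> qb \<Rightarrow> mon" where
  "suf m k e = (e, drop k (snd m))"

definition bmul :: "bel \<Rightarrow> bel \<Rightarrow> bel" where
  "bmul x y m = (\<Sum>k\<in>{0..length (snd m)}. \<Sum>d\<in>{E,I,J,K}. \<Sum>e\<in>{E,I,J,K}.
      (if snd (qmul d e) = slot m k then fst (qmul d e) * x (pre m k d) * y (suf m k e) else 0))"

definition badd :: "bel \<Rightarrow> bel \<Rightarrow> bel" where "badd x y = (\<lambda>m. x m + y m)"
definition bscale :: "real \<Rightarrow> bel \<Rightarrow> bel" where "bscale c x = (\<lambda>m. c * x m)"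
definition bzero :: bel where "bzero = (\<lambda>m. 0)"
definition bbasis :: "mon \<Rightarrow> bel" where "bbasis m0 = (\<lambda>m. if m = m0 then 1 else 0)"

definition bone :: bel where "bone = bbasis (E, [])"
definition bQ1 :: bel where "bQ1 = bbasis (I, [])"
definition bQ2 :: bel where "bQ2 = bbasis (J, [])"
definition bR1 :: bel where "bR1 = bbasis (E, [(RR1, E)])"
definition bR2 :: bel where "bR2 = bbasis (E, [(RR2, E)])"

text \<open>Extension by a central formal infinitesimal t with t^2 = 0: pairs (a,b) = a + t b.\<close>
type_synonym del = "bel \<times> bel"

definition dadd :: "del \<Rightarrow> del \<Rightarrow> del" where
  "dadd x y = (badd (fst x) (fst y), badd (snd x) (snd y))"
definition dscale :: "real \<Rightarrow> del \<Rightarrow> del" where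
  "dscale c x = (bscale c (fst x), bscale c (snd x))"
definition dneg :: "del \<Rightarrow> del" where "dneg x = dscale (-1) x"
definition dsub :: "del \<Rightarrow> del \<Rightarrow> del" where "dsub x y = dadd x (dneg y)"
definition dmul :: "del \<Rightarrow> del \<Rightarrow> del" where
  "dmul x y = (bmul (fst x) (fst y), badd (bmul (fst x) (snd y)) (bmul (snd x) (fst y)))"
definition dunit :: del where "dunit = (bone, bzero)"
definition demb :: "bel \<Rightarrow> del" where "demb x = (x, bzero)"
definition tt :: del where "tt = (bzero, bone)"

text \<open>A formal real noncommutative power series in the eight variables r1..r8 is a coefficient
  function on words over {1..8} (letters outside {1..8} are ignored).\<close>
type_synonym series = "nat list \<Rightarrow> real"

definition words :: "nat \<Rightarrow> nat list set" where
  "words N = {w. set w \<subseteq> {1..8} \<and> length w \<le> N}"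

fun dprod :: "(nat \<Rightarrow> del) \<Rightarrow> nat list \<Rightarrow> del" where
  "dprod xs [] = dunit"
| "dprod xs (k # w) = dmul (xs k) (dprod xs w)"

text \<open>Substitution of infinitesimal elements (no degree-0 part in the t-free component) into a
  series.  For such arguments a word of length n contributes to the t-free part only in
  R-degree \<ge> n and to the t-part only in R-degree \<ge> n-1, so the coefficient of a
  monomial of R-degree N of the (completed) infinite sum is the displayed finite sum.\<close>
definition deval :: "series \<Rightarrow> (nat \<Rightarrow> del) \<Rightarrow> del" where
  "deval f xs =
     ((\<lambda>m. \<Sum>w\<in>words (length (snd m) + 1). f w * fst (dprod xs w) m),
      (\<lambda>m. \<Sum>w\<in>words (length (snd m) + 1). f w * snd (dprod xs w) m))"

text \<open>X^0_Q = (X + Q^{-1} X Q)/2 and X^1_Q = (X - Q^{-1} X Q)/2; for Q^2 = -1 we have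
  Q^{-1} = -Q.\<close>
definition qpart :: "nat \<Rightarrow> del \<Rightarrow> del \<Rightarrow> del" where
  "qpart i Q X = dscale (1/2)
     (if i = 0 then dadd X (dmul (dmul (dneg Q) X) Q) else dsub X (dmul (dmul (dneg Q) X) Q))"

text \<open>Split variables relative to (Q1,Q2) of (R1,R2):
  r_{4(j-1)+2 i1+i2+1} = ((R_j Q_j^{-1})^{i1}_{Q1})^{i2}_{Q2}, k = 1..8.\<close>
definition splitvar :: "del \<Rightarrow> del \<Rightarrow> del \<Rightarrow> del \<Rightarrow> nat \<Rightarrow> del" where
  "splitvar Q1 Q2 R1 R2 k =
     (let j = (k - 1) div 4; i1 = ((k - 1) mod 4) div 2; i2 = (k - 1) mod 2;
          R = (if j = 0 then R1 else R2); Q = (if j = 0 then Q1 else Q2)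
      in qpart i2 Q2 (qpart i1 Q1 (dmul R (dneg Q))))"

definition scal_eval :: "series \<Rightarrow> del \<Rightarrow> del \<Rightarrow> del \<Rightarrow> del \<Rightarrow> del" where
  "scal_eval f Q1 Q2 A1 A2 = deval f (splitvar Q1 Q2 (dsub A1 Q1) (dsub A2 Q2))"

definition vect_eval :: "series \<Rightarrow> series \<Rightarrow> del \<Rightarrow> del \<Rightarrow> del \<Rightarrow> del \<Rightarrow> del \<times> del" where
  "vect_eval f1 f2 Q1 Q2 A1 A2 =
     (dmul (deval f1 (splitvar Q1 Q2 (dsub A1 Q1) (dsub A2 Q2))) Q1,
      dmul (deval f2 (splitvar Q1 Q2 (dsub A1 Q1) (dsub A2 Q2))) Q2)"

definition pseudo_eval :: "series \<Rightarrow> del \<Rightarrow> del \<Rightarrow> del \<Rightarrow> del \<Rightarrow> del" where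
  "pseudo_eval f Q1 Q2 A1 A2 =
     dmul (deval f (splitvar Q1 Q2 (dsub A1 Q1) (dsub A2 Q2))) (dmul Q1 Q2)"

definition Rot :: "del \<times> del \<Rightarrow> del \<times> del" where
  "Rot B = (dadd (fst B) (dmul tt (snd B)), dsub (snd B) (dmul tt (fst B)))"

definition Q1D :: del where "Q1D = demb bQ1"
definition Q2D :: del where "Q2D = demb bQ2"
definition A1D :: del where "A1D = demb (badd bQ1 bR1)"
definition A2D :: del where "A2D = demb (badd bQ2 bR2)"

definition OI_scalar :: "series \<Rightarrow> bool" where
  "OI_scalar f \<longleftrightarrow>
     scal_eval f Q1D Q2D A1D A2D =
     scal_eval f (fst (Rot (Q1D, Q2D))) (snd (Rot (Q1D, Q2D)))
                 (fst (Rot (A1D, A2D))) (snd (Rot (A1D, A2D)))"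

definition OI_pseudo :: "series \<Rightarrow> bool" where
  "OI_pseudo f \<longleftrightarrow>
     pseudo_eval f Q1D Q2D A1D A2D =
     pseudo_eval f (fst (Rot (Q1D, Q2D))) (snd (Rot (Q1D, Q2D)))
                   (fst (Rot (A1D, A2D))) (snd (Rot (A1D, A2D)))"

definition OI_vect :: "series \<Rightarrow> series \<Rightarrow> bool" where
  "OI_vect f1 f2 \<longleftrightarrow>
     Rot (vect_eval f1 f2 Q1D Q2D A1D A2D) =
     vect_eval f1 f2 (fst (Rot (Q1D, Q2D))) (snd (Rot (Q1D, Q2D)))
                     (fst (Rot (A1D, A2D))) (snd (Rot (A1D, A2D)))"

text \<open>Mixed basis: rhat_l = sum_k Nhat l k * r_k (as in the paper).\<close>
definition Nhat :: "nat \<Rightarrow> nat \<Rightarrow> real" where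
  "Nhat l k =
    (if l = 1 then (if k = 2 then 1/2 else if k = 7 then -1/2 else 0)
     else if l = 2 then (if k = 2 then 1/2 else if k = 7 then 1/2 else 0)
     else if l = 3 then (if k = 1 then 1/2 else if k = 5 then 1/2 else 0)
     else if l = 4 then (if k = 1 then 1/2 else if k = 5 then -1/2 else 0)
     else if l = 5 then (if k = 4 then 1/2 else if k = 8 then -1/2 else 0)
     else if l = 6 then (if k = 4 then 1/2 else if k = 8 then 1/2 else 0)
     else if l = 7 then (if k = 3 then 1/2 else if k = 6 then 1/2 else 0)
     else if l = 8 then (if k = 3 then 1/2 else if k = 6 then -1/2 else 0)
     else 0)"

text \<open>Circular basis: rtilde_l = sum_k Ntil l k * r_k.\<close>
definition Ntil :: "nat \<Rightarrow> nat \<Rightarrow> real" where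
  "Ntil l k = (if l = 4 then Nhat 4 k + Nhat 5 k
               else if l = 5 then Nhat 4 k - Nhat 5 k
               else Nhat l k)"

text \<open>Inverse change of basis: r_k = sum_l Mtil k l * rtilde_l.\<close>
definition Mtil :: "nat \<Rightarrow> nat \<Rightarrow> real" where
  "Mtil k l =
    (if k = 1 then (if l = 3 then 1 else if l = 4 then 1/2 else if l = 5 then 1/2 else 0)
     else if k = 2 then (if l = 1 then 1 else if l = 2 then 1 else 0)
     else if k = 3 then (if l = 7 then 1 else if l = 8 then 1 else 0)
     else if k = 4 then (if l = 4 then 1/2 else if l = 5 then -1/2 else if l = 6 then 1 else 0)
     else if k = 5 then (if l = 3 then 1 else if l = 4 then -1/2 else if l = 5 then -1/2 else 0)
     else if k = 6 then (if l = 7 then 1 else if l = 8 then -1 else 0)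
     else if k = 7 then (if l = 1 then -1 else if l = 2 then 1 else 0)
     else if k = 8 then (if l = 4 then -1/2 else if l = 5 then 1/2 else if l = 6 then 1 else 0)
     else 0)"

lemma Ntil_Mtil_inverse:
  assumes "l \<in> {1..8}" "m \<in> {1..8}"
  shows "(\<Sum>k\<in>{1..8::nat}. Ntil l k * Mtil k m) = (if l = m then 1 else 0)"
proof -
  have S: "{1..8::nat} = {1,2,3,4,5,6,7,8}" by auto
  from assms have "l \<in> {1,2,3,4,5,6,7,8}" "m \<in> {1,2,3,4,5,6,7,8}" by auto
  then show ?thesis
    unfolding S by (auto simp: Ntil_def Nhat_def Mtil_def)
qed

text \<open>Coefficient of rtilde_{i1} ... rtilde_{ir} in f rewritten as a series in the
  rtilde variables (substituting r_k = sum_l Mtil k l rtilde_l).\<close>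
definition ptilde :: "series \<Rightarrow> nat list \<Rightarrow> real" where
  "ptilde f v = (\<Sum>w\<in>{w. set w \<subseteq> {1..8} \<and> length w = length v}.
                   f w * (\<Prod>j<length v. Mtil (w ! j) (v ! j)))"

inductive redstep :: "nat list \<Rightarrow> nat list \<Rightarrow> bool" where
  "a \<in> {1, 2} \<Longrightarrow> redstep (u @ [a, a] @ v) (u @ v)"

definition red :: "nat list \<Rightarrow> nat list" where
  "red w = (SOME v. redstep\<^sup>*\<^sup>* w v \<and> (\<forall>u. redstep\<^sup>*\<^sup>* w u \<longrightarrow> length v \<le> length u))"

end

theory Submission
  imports Defs
begin


definition deg1 :: "(qb \<Rightarrow> rlet \<Rightarrow> qb \<Rightarrow> real) \<Rightarrow> bel" where
  "deg1 t m = (case snd m of [(r,c1)] \<Rightarrow> t (fst m) r c1 | _ \<Rightarrow> 0)"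

lemma deg1_zero: "length (snd m) \<noteq> 1 \<Longrightarrow> deg1 t m = 0"
  by (cases m) (auto simp: deg1_def split: list.split)

lemma length_pre: "k \<le> length (snd m) \<Longrightarrow> length (snd (pre m k d)) = k"
  by (auto simp: pre_def)

lemma qb_UNIV: "(UNIV :: qb set) = {E,I,J,K}"
  using qb.exhaust by auto

lemma bmul_deg1_cons:
  "bmul (deg1 t) y (c0, (r,c1)#rest) = (\<Sum>d\<in>{E,I,J,K}. \<Sum>e\<in>{E,I,J,K}.
      if snd (qmul d e) = c1 then fst (qmul d e) * t c0 r d * y (e, rest) else 0)"
proof -
  let ?m = "(c0, (r,c1)#rest)"
  let ?g = "\<lambda>k. \<Sum>d\<in>{E,I,J,K}. \<Sum>e\<in>{E,I,J,K}. (if snd (qmul d e) = slot ?m k then fst (qmul d e) * deg1 t (pre ?m k d) * y (suf ?m k e) else 0)"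
  have "bmul (deg1 t) y ?m = sum ?g {0..length ((r,c1)#rest)}" by (simp add: bmul_def)
  also have "\<dots> = ?g 1 + sum ?g ({0..length ((r,c1)#rest)} - {1})" by (subst sum.remove[of _ 1]) auto
  also have "sum ?g ({0..length ((r,c1)#rest)} - {1}) = 0"
  proof (rule sum.neutral, rule ballI)
    fix k assume k: "k \<in> {0..length ((r,c1)#rest)} - {1}"
    have "deg1 t (pre ?m k d) = 0" for d
      by (rule deg1_zero) (use k in \<open>subst length_pre, auto\<close>)
    then show "?g k = 0" by simp
  qed
  also have "?g 1 = (\<Sum>d\<in>{E,I,J,K}. \<Sum>e\<in>{E,I,J,K}.
      if snd (qmul d e) = c1 then fst (qmul d e) * t c0 r d * y (e, rest) else 0)"
    by (simp add: slot_def pre_def suf_def deg1_def)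
  finally show ?thesis by simp
qed





lemma bmul_nil:
  "bmul x y (c0, []) = (\<Sum>d\<in>{E,I,J,K}. \<Sum>e\<in>{E,I,J,K}.
      if snd (qmul d e) = c0 then fst (qmul d e) * x (d,[]) * y (e, []) else 0)"
  unfolding bmul_def apply (simp only: snd_conv list.size atLeastAtMost_singleton)
  by (simp add: pre_def slot_def suf_def)

lemma bmul_deg1_nil: "bmul (deg1 t) y (c0, []) = 0"
  by (simp add: bmul_nil deg1_def)

lemma bmul_scale_left: "bmul (bscale c x) y = bscale c (bmul x y)"
proof -
  have h: "\<And>P a b z. (if P then a * (c*b) * z else 0) = c * (if P then a*b*z else (0::real))" by simp
  show ?thesis unfolding bmul_def bscale_def by (simp only: h sum_distrib_left)
qed

lemma bmul_scale_right: "bmul x (bscale c y) = bscale c (bmul x y)"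
proof -
  have h: "\<And>P a b z. (if P then a * b * (c*z) else 0) = c * (if P then a*b*z else (0::real))" by simp
  show ?thesis unfolding bmul_def bscale_def by (simp only: h sum_distrib_left)
qed

lemma bmul_zero_left: "bmul bzero y = bzero"
  unfolding bmul_def bzero_def by (simp only: mult_zero_right mult_zero_left if_cancel sum.neutral_const)

lemma bmul_zero_right: "bmul x bzero = bzero"
  unfolding bmul_def bzero_def by (simp only: mult_zero_right mult_zero_left if_cancel sum.neutral_const)

lemma bmul_add_left: "bmul (badd x x') y = badd (bmul x y) (bmul x' y)"
proof -
  have h: "\<And>P a b b' z. (if P then a * (b+b') * z else 0) = (if P then a*b*z else (0::real)) + (if P then a*b'*z else (0::real))" by (simp add: algebra_simps)
  show ?thesis unfolding bmul_def badd_def by (simp only: h sum.distrib)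
qed

lemma bmul_add_right: "bmul x (badd y y') = badd (bmul x y) (bmul x y')"
proof -
  have h: "\<And>P a b z z'. (if P then a * b * (z+z') else 0) = (if P then a*b*z else (0::real)) + (if P then a*b*z' else (0::real))" by (simp add: algebra_simps)
  show ?thesis unfolding bmul_def badd_def by (simp only: h sum.distrib)
qed

definition Lm :: "qb \<Rightarrow> bel \<Rightarrow> bel" where
  "Lm d y m = (\<Sum>c\<in>{E,I,J,K}. if snd (qmul d c) = fst m then fst (qmul d c) * y (c, snd m) else 0)"

definition Rm :: "qb \<Rightarrow> bel \<Rightarrow> bel" where
  "Rm d x m = (\<Sum>c\<in>{E,I,J,K}. if snd (qmul c d) = slot m (length (snd m))
       then fst (qmul c d) * x (pre m (length (snd m)) c) else 0)"

lemma pre_ne: "0 < k \<Longrightarrow> snd (pre m k d) \<noteq> []"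
  by (simp add: pre_def)

lemma bmul_basis_left: "bmul (bbasis (d,[])) y = Lm d y"
proof (rule ext)
  fix m :: mon
  let ?g = "\<lambda>k. \<Sum>d'\<in>{E,I,J,K}. \<Sum>e\<in>{E,I,J,K}. (if snd (qmul d' e) = slot m k then fst (qmul d' e) * bbasis (d,[]) (pre m k d') * y (suf m k e) else 0)"
  have "bmul (bbasis (d,[])) y m = sum ?g {0..length (snd m)}" by (simp add: bmul_def)
  also have "\<dots> = ?g 0 + sum ?g ({0..length (snd m)} - {0})" by (subst sum.remove[of _ 0]) auto
  also have "sum ?g ({0..length (snd m)} - {0}) = 0"
  proof (rule sum.neutral, rule ballI)
    fix k assume k: "k \<in> {0..length (snd m)} - {0}"
    have "bbasis (d,[]) (pre m k d') = 0" for d'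
      using pre_ne[of k m d'] k by (auto simp: bbasis_def)
    then show "?g k = 0" by simp
  qed
  also have "?g 0 = Lm d y m"
    by (cases m; cases d) (simp_all add: slot_def pre_def suf_def bbasis_def Lm_def)
  finally show "bmul (bbasis (d,[])) y m = Lm d y m" by simp
qed

lemma bmul_basis_right: "bmul x (bbasis (d,[])) = Rm d x"
proof (rule ext)
  fix m :: mon
  let ?n = "length (snd m)"
  let ?g = "\<lambda>k. \<Sum>d'\<in>{E,I,J,K}. \<Sum>e\<in>{E,I,J,K}. (if snd (qmul d' e) = slot m k then fst (qmul d' e) * x (pre m k d') * bbasis (d,[]) (suf m k e) else 0)"
  have "bmul x (bbasis (d,[])) m = sum ?g {0..?n}" by (simp add: bmul_def)
  also have "\<dots> = ?g ?n + sum ?g ({0..?n} - {?n})" by (subst sum.remove[of _ ?n]) auto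
  also have "sum ?g ({0..?n} - {?n}) = 0"
  proof (rule sum.neutral, rule ballI)
    fix k assume k: "k \<in> {0..?n} - {?n}"
    have "bbasis (d,[]) (suf m k e) = 0" for e
      using k by (auto simp: bbasis_def suf_def)
    then show "?g k = 0" by simp
  qed
  also have "?g ?n = Rm d x m"
    by (cases d) (simp_all add: suf_def bbasis_def Rm_def)
  finally show "bmul x (bbasis (d,[])) m = Rm d x m" by simp
qed

definition tL :: "qb \<Rightarrow> (qb \<Rightarrow> rlet \<Rightarrow> qb \<Rightarrow> real) \<Rightarrow> qb \<Rightarrow> rlet \<Rightarrow> qb \<Rightarrow> real" where
  "tL d t c0 r c1 = (\<Sum>c\<in>{E,I,J,K}. if snd (qmul d c) = c0 then fst (qmul d c) * t c r c1 else 0)"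
definition tR :: "qb \<Rightarrow> (qb \<Rightarrow> rlet \<Rightarrow> qb \<Rightarrow> real) \<Rightarrow> qb \<Rightarrow> rlet \<Rightarrow> qb \<Rightarrow> real" where
  "tR d t c0 r c1 = (\<Sum>c\<in>{E,I,J,K}. if snd (qmul c d) = c1 then fst (qmul c d) * t c0 r c else 0)"

lemma Lm_deg1: "Lm d (deg1 t) = deg1 (tL d t)"
proof (rule ext)
  fix m :: mon
  obtain c0 l where m: "m = (c0,l)" by (cases m)
  show "Lm d (deg1 t) m = deg1 (tL d t) m"
    unfolding m by (cases l rule: list.exhaust; cases "tl l") (auto simp: Lm_def deg1_def tL_def split: list.split)
qed

lemma Rm_deg1: "Rm d (deg1 t) = deg1 (tR d t)"
proof (rule ext)
  fix m :: mon
  obtain c0 l where m: "m = (c0,l)" by (cases m)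
  show "Rm d (deg1 t) m = deg1 (tR d t) m"
  proof (cases "length l = 1")
    case True
    then obtain r c1 where "l = [(r,c1)]" by (cases l) auto
    then show ?thesis by (simp add: m Rm_def deg1_def tR_def slot_def pre_def)
  next
    case False
    then have "deg1 t (pre m (length (snd m)) c) = 0" for c
      by (intro deg1_zero) (simp add: m length_pre)
    with False show ?thesis by (simp add: m Rm_def deg1_zero)
  qed
qed

lemma badd_deg1: "badd (deg1 t) (deg1 u) = deg1 (\<lambda>a b c. t a b c + u a b c)"
  by (rule ext) (simp add: badd_def deg1_def split: list.split)
lemma bscale_deg1: "bscale s (deg1 t) = deg1 (\<lambda>a b c. s * t a b c)"
  by (rule ext) (simp add: bscale_def deg1_def split: list.split)
lemma bzero_deg1: "bzero = deg1 (\<lambda>a b c. 0)"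
  by (rule ext) (simp add: bzero_def deg1_def split: list.split)
lemma bR1_deg1: "bR1 = deg1 (\<lambda>a b c. if a = E \<and> b = RR1 \<and> c = E then 1 else 0)"
  by (rule ext) (auto simp: bR1_def bbasis_def deg1_def split: list.split)
lemma bR2_deg1: "bR2 = deg1 (\<lambda>a b c. if a = E \<and> b = RR2 \<and> c = E then 1 else 0)"
  by (rule ext) (auto simp: bR2_def bbasis_def deg1_def split: list.split)


definition tA1 :: "qb \<Rightarrow> rlet \<Rightarrow> qb \<Rightarrow> real" where
  "tA1 c0 r c1 = (case c0 of E \<Rightarrow> (case r of RR1 \<Rightarrow> (case c1 of E \<Rightarrow> 0 | I \<Rightarrow> (-1/4) | J \<Rightarrow> 0 | K \<Rightarrow> 0) | RR2 \<Rightarrow> (case c1 of E \<Rightarrow> 0 | I \<Rightarrow> 0 | J \<Rightarrow> 0 | K \<Rightarrow> 0)) | I \<Rightarrow> (case r of RR1 \<Rightarrow> (case c1 of E \<Rightarrow> (-1/4) | I \<Rightarrow> 0 | J \<Rightarrow> 0 | K \<Rightarrow> 0) | RR2 \<Rightarrow> (case c1 of E \<Rightarrow> 0 | I \<Rightarrow> 0 | J \<Rightarrow> 0 | K \<Rightarrow> 0)) | J \<Rightarrow> (case r of RR1 \<Rightarrow> (case c1 of E \<Rightarrow> 0 | I \<Rightarrow> 0 | J \<Rightarrow> 0 | K \<Rightarrow> (1/4)) | RR2 \<Rightarrow> (case c1 of E \<Rightarrow> 0 | I \<Rightarrow> 0 | J \<Rightarrow> 0 | K \<Rightarrow> 0))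 | K \<Rightarrow> (case r of RR1 \<Rightarrow> (case c1 of E \<Rightarrow> 0 | I \<Rightarrow> 0 | J \<Rightarrow> (-1/4) | K \<Rightarrow> 0) | RR2 \<Rightarrow> (case c1 of E \<Rightarrow> 0 | I \<Rightarrow> 0 | J \<Rightarrow> 0 | K \<Rightarrow> 0)))"

definition tB1 :: "qb \<Rightarrow> rlet \<Rightarrow> qb \<Rightarrow> real" where
  "tB1 c0 r c1 = (case c0 of E \<Rightarrow> (case r of RR1 \<Rightarrow> (case c1 of E \<Rightarrow> 0 | I \<Rightarrow> 0 | J \<Rightarrow> (-1/4) | K \<Rightarrow> 0) | RR2 \<Rightarrow> (case c1 of E \<Rightarrow> 0 | I \<Rightarrow> (-1/4) | J \<Rightarrow> 0 | K \<Rightarrow> 0)) | I \<Rightarrow> (case r of RR1 \<Rightarrow> (case c1 of E \<Rightarrow> 0 | I \<Rightarrow> 0 | J \<Rightarrow> 0 | K \<Rightarrow> (-1/4)) | RR2 \<Rightarrow> (case c1 of E \<Rightarrow> (-1/4) | I \<Rightarrow> 0 | J \<Rightarrow> 0 | K \<Rightarrow> 0)) | J \<Rightarrow> (case r of RR1 \<Rightarrow> (case c1 of E \<Rightarrow> (-1/4) | I \<Rightarrow> 0 | J \<Rightarrow> 0 | K \<Rightarrow> 0) | RR2 \<Rightarrow> (case c1 of E \<Rightarrow> 0 | I \<Rightarrow> 0 | J \<Rightarrow> 0 | K \<Rightarrow> (1/4))) | K \<Rightarrow> (case r of RR1 \<Rightarrow> (case c1 of E \<Rightarrow> 0 | I \<Rightarrow>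 (1/4) | J \<Rightarrow> 0 | K \<Rightarrow> 0) | RR2 \<Rightarrow> (case c1 of E \<Rightarrow> 0 | I \<Rightarrow> 0 | J \<Rightarrow> (-1/4) | K \<Rightarrow> 0)))"

definition tA2 :: "qb \<Rightarrow> rlet \<Rightarrow> qb \<Rightarrow> real" where
  "tA2 c0 r c1 = (case c0 of E \<Rightarrow> (case r of RR1 \<Rightarrow> (case c1 of E \<Rightarrow> 0 | I \<Rightarrow> (-1/4) | J \<Rightarrow> 0 | K \<Rightarrow> 0) | RR2 \<Rightarrow> (case c1 of E \<Rightarrow> 0 | I \<Rightarrow> 0 | J \<Rightarrow> 0 | K \<Rightarrow> 0)) | I \<Rightarrow> (case r of RR1 \<Rightarrow> (case c1 of E \<Rightarrow> (-1/4) | I \<Rightarrow> 0 | J \<Rightarrow> 0 | K \<Rightarrow> 0) | RR2 \<Rightarrow> (case c1 of E \<Rightarrow> 0 | I \<Rightarrow> 0 | J \<Rightarrow> 0 | K \<Rightarrow> 0)) | J \<Rightarrow> (case r of RR1 \<Rightarrow> (case c1 of E \<Rightarrow> 0 | I \<Rightarrow> 0 | J \<Rightarrow> 0 | K \<Rightarrow> (-1/4)) | RR2 \<Rightarrow> (case c1 of E \<Rightarrow> 0 | I \<Rightarrow> 0 | J \<Rightarrow> 0 | K \<Rightarrow> 0)) | K \<Rightarrow> (case r of RR1 \<Rightarrow> (case c1 of E \<Rightarrow> 0 | I \<Rightarrow> 0 | J \<Rightarrow> (1/4) | K \<Rightarrow> 0) | RR2 \<Rightarrow> (case c1 of E \<Rightarrow>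 0 | I \<Rightarrow> 0 | J \<Rightarrow> 0 | K \<Rightarrow> 0)))"

definition tB2 :: "qb \<Rightarrow> rlet \<Rightarrow> qb \<Rightarrow> real" where
  "tB2 c0 r c1 = (case c0 of E \<Rightarrow> (case r of RR1 \<Rightarrow> (case c1 of E \<Rightarrow> 0 | I \<Rightarrow> 0 | J \<Rightarrow> (-1/4) | K \<Rightarrow> 0) | RR2 \<Rightarrow> (case c1 of E \<Rightarrow> 0 | I \<Rightarrow> (-1/4) | J \<Rightarrow> 0 | K \<Rightarrow> 0)) | I \<Rightarrow> (case r of RR1 \<Rightarrow> (case c1 of E \<Rightarrow> 0 | I \<Rightarrow> 0 | J \<Rightarrow> 0 | K \<Rightarrow> (1/4)) | RR2 \<Rightarrow> (case c1 of E \<Rightarrow> (-1/4) | I \<Rightarrow> 0 | J \<Rightarrow> 0 | K \<Rightarrow> 0)) | J \<Rightarrow> (case r of RR1 \<Rightarrow> (case c1 of E \<Rightarrow> (-1/4) | I \<Rightarrow> 0 | J \<Rightarrow> 0 | K \<Rightarrow> 0) | RR2 \<Rightarrow> (case c1 of E \<Rightarrow> 0 | I \<Rightarrow> 0 | J \<Rightarrow> 0 | K \<Rightarrow> (-1/4))) | K \<Rightarrow> (case r of RR1 \<Rightarrow> (case c1 of E \<Rightarrow> 0 | I \<Rightarrow> (-1/4) | J \<Rightarrow> 0 | K \<Rightarrow> 0) | RR2 \<Rightarrow> (case c1 of E \<Rightarrow> 0 | I \<Rightarrow> 0 | J \<Rightarrow> (1/4) | K \<Rightarrow> 0)))"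

definition tA3 :: "qb \<Rightarrow> rlet \<Rightarrow> qb \<Rightarrow> real" where
  "tA3 c0 r c1 = (case c0 of E \<Rightarrow> (case r of RR1 \<Rightarrow> (case c1 of E \<Rightarrow> 0 | I \<Rightarrow> (-1/4) | J \<Rightarrow> 0 | K \<Rightarrow> 0) | RR2 \<Rightarrow> (case c1 of E \<Rightarrow> 0 | I \<Rightarrow> 0 | J \<Rightarrow> 0 | K \<Rightarrow> 0)) | I \<Rightarrow> (case r of RR1 \<Rightarrow> (case c1 of E \<Rightarrow> (1/4) | I \<Rightarrow> 0 | J \<Rightarrow> 0 | K \<Rightarrow> 0) | RR2 \<Rightarrow> (case c1 of E \<Rightarrow> 0 | I \<Rightarrow> 0 | J \<Rightarrow> 0 | K \<Rightarrow> 0)) | J \<Rightarrow> (case r of RR1 \<Rightarrow> (case c1 of E \<Rightarrow> 0 | I \<Rightarrow> 0 | J \<Rightarrow> 0 | K \<Rightarrow> (1/4)) | RR2 \<Rightarrow> (case c1 of E \<Rightarrow> 0 | I \<Rightarrow> 0 | J \<Rightarrow> 0 | K \<Rightarrow> 0)) | K \<Rightarrow> (case r of RR1 \<Rightarrow> (case c1 of E \<Rightarrow> 0 | I \<Rightarrow> 0 | J \<Rightarrow> (1/4) | K \<Rightarrow> 0) | RR2 \<Rightarrow> (case c1 of E \<Rightarrow> 0 | I \<Rightarrow> 0 | J \<Rightarrow> 0 | K \<Rightarrow> 0)))"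

definition tB3 :: "qb \<Rightarrow> rlet \<Rightarrow> qb \<Rightarrow> real" where
  "tB3 c0 r c1 = (case c0 of E \<Rightarrow> (case r of RR1 \<Rightarrow> (case c1 of E \<Rightarrow> 0 | I \<Rightarrow> 0 | J \<Rightarrow> (-1/4) | K \<Rightarrow> 0) | RR2 \<Rightarrow> (case c1 of E \<Rightarrow> 0 | I \<Rightarrow> (-1/4) | J \<Rightarrow> 0 | K \<Rightarrow> 0)) | I \<Rightarrow> (case r of RR1 \<Rightarrow> (case c1 of E \<Rightarrow> 0 | I \<Rightarrow> 0 | J \<Rightarrow> 0 | K \<Rightarrow> (-1/4)) | RR2 \<Rightarrow> (case c1 of E \<Rightarrow> (1/4) | I \<Rightarrow> 0 | J \<Rightarrow> 0 | K \<Rightarrow> 0)) | J \<Rightarrow> (case r of RR1 \<Rightarrow> (case c1 of E \<Rightarrow> (1/4) | I \<Rightarrow> 0 | J \<Rightarrow> 0 | K \<Rightarrow> 0) | RR2 \<Rightarrow> (case c1 of E \<Rightarrow> 0 | I \<Rightarrow> 0 | J \<Rightarrow> 0 | K \<Rightarrow> (1/4))) | K \<Rightarrow> (case r of RR1 \<Rightarrow> (case c1 of E \<Rightarrow> 0 | I \<Rightarrow> (-1/4) | J \<Rightarrow> 0 | K \<Rightarrow> 0) | RR2 \<Rightarrow> (case c1 of E \<Rightarrow> 0 | I \<Rightarrow> 0 | J \<Rightarrow> (1/4) | K \<Rightarrow> 0)))"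

definition tA4 :: "qb \<Rightarrow> rlet \<Rightarrow> qb \<Rightarrow> real" where
  "tA4 c0 r c1 = (case c0 of E \<Rightarrow> (case r of RR1 \<Rightarrow> (case c1 of E \<Rightarrow> 0 | I \<Rightarrow> (-1/4) | J \<Rightarrow> 0 | K \<Rightarrow> 0) | RR2 \<Rightarrow> (case c1 of E \<Rightarrow> 0 | I \<Rightarrow> 0 | J \<Rightarrow> 0 | K \<Rightarrow> 0)) | I \<Rightarrow> (case r of RR1 \<Rightarrow> (case c1 of E \<Rightarrow> (1/4) | I \<Rightarrow> 0 | J \<Rightarrow> 0 | K \<Rightarrow> 0) | RR2 \<Rightarrow> (case c1 of E \<Rightarrow> 0 | I \<Rightarrow> 0 | J \<Rightarrow> 0 | K \<Rightarrow> 0)) | J \<Rightarrow> (case r of RR1 \<Rightarrow> (case c1 of E \<Rightarrow> 0 | I \<Rightarrow> 0 | J \<Rightarrow> 0 | K \<Rightarrow> (-1/4)) | RR2 \<Rightarrow> (case c1 of E \<Rightarrow> 0 | I \<Rightarrow> 0 | J \<Rightarrow> 0 | K \<Rightarrow> 0)) | K \<Rightarrow> (case r of RR1 \<Rightarrow> (case c1 of E \<Rightarrow> 0 | I \<Rightarrow> 0 | J \<Rightarrow> (-1/4) | K \<Rightarrow> 0) | RR2 \<Rightarrow> (case c1 of E \<Rightarrow> 0 | I \<Rightarrow> 0 | J \<Rightarrow> 0 | K \<Rightarrow> 0)))"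

definition tB4 :: "qb \<Rightarrow> rlet \<Rightarrow> qb \<Rightarrow> real" where
  "tB4 c0 r c1 = (case c0 of E \<Rightarrow> (case r of RR1 \<Rightarrow> (case c1 of E \<Rightarrow> 0 | I \<Rightarrow> 0 | J \<Rightarrow> (-1/4) | K \<Rightarrow> 0) | RR2 \<Rightarrow> (case c1 of E \<Rightarrow> 0 | I \<Rightarrow> (-1/4) | J \<Rightarrow> 0 | K \<Rightarrow> 0)) | I \<Rightarrow> (case r of RR1 \<Rightarrow> (case c1 of E \<Rightarrow> 0 | I \<Rightarrow> 0 | J \<Rightarrow> 0 | K \<Rightarrow> (1/4)) | RR2 \<Rightarrow> (case c1 of E \<Rightarrow> (1/4) | I \<Rightarrow> 0 | J \<Rightarrow> 0 | K \<Rightarrow> 0)) | J \<Rightarrow> (case r of RR1 \<Rightarrow> (case c1 of E \<Rightarrow> (1/4) | I \<Rightarrow> 0 | J \<Rightarrow> 0 | K \<Rightarrow> 0) | RR2 \<Rightarrow> (case c1 of E \<Rightarrow> 0 | I \<Rightarrow> 0 | J \<Rightarrow> 0 | K \<Rightarrow> (-1/4))) | K \<Rightarrow> (case r of RR1 \<Rightarrow> (case c1 of E \<Rightarrow> 0 | I \<Rightarrow> (1/4) | J \<Rightarrow> 0 | K \<Rightarrow> 0) | RR2 \<Rightarrow> (case c1 of E \<Rightarrow> 0 | I \<Rightarrow> 0 | J \<Rightarrow> (-1/4) | K \<Rightarrow> 0)))"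

definition tA5 :: "qb \<Rightarrow> rlet \<Rightarrow> qb \<Rightarrow> real" where
  "tA5 c0 r c1 = (case c0 of E \<Rightarrow> (case r of RR1 \<Rightarrow> (case c1 of E \<Rightarrow> 0 | I \<Rightarrow> 0 | J \<Rightarrow> 0 | K \<Rightarrow> 0) | RR2 \<Rightarrow> (case c1 of E \<Rightarrow> 0 | I \<Rightarrow> 0 | J \<Rightarrow> (-1/4) | K \<Rightarrow> 0)) | I \<Rightarrow> (case r of RR1 \<Rightarrow> (case c1 of E \<Rightarrow> 0 | I \<Rightarrow> 0 | J \<Rightarrow> 0 | K \<Rightarrow> 0) | RR2 \<Rightarrow> (case c1 of E \<Rightarrow> 0 | I \<Rightarrow> 0 | J \<Rightarrow> 0 | K \<Rightarrow> (-1/4))) | J \<Rightarrow> (case r of RR1 \<Rightarrow> (case c1 of E \<Rightarrow> 0 | I \<Rightarrow> 0 | J \<Rightarrow> 0 | K \<Rightarrow> 0) | RR2 \<Rightarrow> (case c1 of E \<Rightarrow> (-1/4) | I \<Rightarrow> 0 | J \<Rightarrow> 0 | K \<Rightarrow> 0)) | K \<Rightarrow> (case r of RR1 \<Rightarrow> (case c1 of E \<Rightarrow> 0 | I \<Rightarrow> 0 | J \<Rightarrow> 0 | K \<Rightarrow> 0) | RR2 \<Rightarrow> (case c1 of E \<Rightarrow> 0 | I \<Rightarrow> (1/4) | J \<Rightarrow> 0 | K \<Rightarrow> 0)))"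

definition tB5 :: "qb \<Rightarrow> rlet \<Rightarrow> qb \<Rightarrow> real" where
  "tB5 c0 r c1 = (case c0 of E \<Rightarrow> (case r of RR1 \<Rightarrow> (case c1 of E \<Rightarrow> 0 | I \<Rightarrow> 0 | J \<Rightarrow> (1/4) | K \<Rightarrow> 0) | RR2 \<Rightarrow> (case c1 of E \<Rightarrow> 0 | I \<Rightarrow> (1/4) | J \<Rightarrow> 0 | K \<Rightarrow> 0)) | I \<Rightarrow> (case r of RR1 \<Rightarrow> (case c1 of E \<Rightarrow> 0 | I \<Rightarrow> 0 | J \<Rightarrow> 0 | K \<Rightarrow> (1/4)) | RR2 \<Rightarrow> (case c1 of E \<Rightarrow> (1/4) | I \<Rightarrow> 0 | J \<Rightarrow> 0 | K \<Rightarrow> 0)) | J \<Rightarrow> (case r of RR1 \<Rightarrow> (case c1 of E \<Rightarrow> (1/4) | I \<Rightarrow> 0 | J \<Rightarrow> 0 | K \<Rightarrow> 0) | RR2 \<Rightarrow> (case c1 of E \<Rightarrow> 0 | I \<Rightarrow> 0 | J \<Rightarrow> 0 | K \<Rightarrow> (-1/4))) | K \<Rightarrow> (case r of RR1 \<Rightarrow> (case c1 of E \<Rightarrow> 0 | I \<Rightarrow> (-1/4) | J \<Rightarrow> 0 | K \<Rightarrow> 0) | RR2 \<Rightarrow> (case c1 of E \<Rightarrow> 0 | I \<Rightarrow> 0 | J \<Rightarrow> (1/4) | K \<Rightarrow> 0)))"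

definition tA6 :: "qb \<Rightarrow> rlet \<Rightarrow> qb \<Rightarrow> real" where
  "tA6 c0 r c1 = (case c0 of E \<Rightarrow> (case r of RR1 \<Rightarrow> (case c1 of E \<Rightarrow> 0 | I \<Rightarrow> 0 | J \<Rightarrow> 0 | K \<Rightarrow> 0) | RR2 \<Rightarrow> (case c1 of E \<Rightarrow> 0 | I \<Rightarrow> 0 | J \<Rightarrow> (-1/4) | K \<Rightarrow> 0)) | I \<Rightarrow> (case r of RR1 \<Rightarrow> (case c1 of E \<Rightarrow> 0 | I \<Rightarrow> 0 | J \<Rightarrow> 0 | K \<Rightarrow> 0) | RR2 \<Rightarrow> (case c1 of E \<Rightarrow> 0 | I \<Rightarrow> 0 | J \<Rightarrow> 0 | K \<Rightarrow> (-1/4))) | J \<Rightarrow> (case r of RR1 \<Rightarrow> (case c1 of E \<Rightarrow> 0 | I \<Rightarrow> 0 | J \<Rightarrow> 0 | K \<Rightarrow> 0) | RR2 \<Rightarrow> (case c1 of E \<Rightarrow> (1/4) | I \<Rightarrow> 0 | J \<Rightarrow> 0 | K \<Rightarrow> 0)) | K \<Rightarrow> (case r of RR1 \<Rightarrow> (case c1 of E \<Rightarrow> 0 | I \<Rightarrow> 0 | J \<Rightarrow> 0 | K \<Rightarrow> 0) | RR2 \<Rightarrow> (case c1 of E \<Rightarrow> 0 | I \<Rightarrow> (-1/4) | J \<Rightarrow> 0 | K \<Rightarrow> 0)))"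

definition tB6 :: "qb \<Rightarrow> rlet \<Rightarrow> qb \<Rightarrow> real" where
  "tB6 c0 r c1 = (case c0 of E \<Rightarrow> (case r of RR1 \<Rightarrow> (case c1 of E \<Rightarrow> 0 | I \<Rightarrow> 0 | J \<Rightarrow> (1/4) | K \<Rightarrow> 0) | RR2 \<Rightarrow> (case c1 of E \<Rightarrow> 0 | I \<Rightarrow> (1/4) | J \<Rightarrow> 0 | K \<Rightarrow> 0)) | I \<Rightarrow> (case r of RR1 \<Rightarrow> (case c1 of E \<Rightarrow> 0 | I \<Rightarrow> 0 | J \<Rightarrow> 0 | K \<Rightarrow> (1/4)) | RR2 \<Rightarrow> (case c1 of E \<Rightarrow> (-1/4) | I \<Rightarrow> 0 | J \<Rightarrow> 0 | K \<Rightarrow> 0)) | J \<Rightarrow> (case r of RR1 \<Rightarrow> (case c1 of E \<Rightarrow> (-1/4) | I \<Rightarrow> 0 | J \<Rightarrow> 0 | K \<Rightarrow> 0) | RR2 \<Rightarrow> (case c1 of E \<Rightarrow> 0 | I \<Rightarrow> 0 | J \<Rightarrow> 0 | K \<Rightarrow> (-1/4))) | K \<Rightarrow> (case r of RR1 \<Rightarrow> (case c1 of E \<Rightarrow> 0 | I \<Rightarrow> (1/4) | J \<Rightarrow> 0 | K \<Rightarrow> 0) | RR2 \<Rightarrow> (case c1 of E \<Rightarrow> 0 | I \<Rightarrow> 0 | J \<Rightarrow> (-1/4) | K \<Rightarrow> 0)))"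

definition tA7 :: "qb \<Rightarrow> rlet \<Rightarrow> qb \<Rightarrow> real" where
  "tA7 c0 r c1 = (case c0 of E \<Rightarrow> (case r of RR1 \<Rightarrow> (case c1 of E \<Rightarrow> 0 | I \<Rightarrow> 0 | J \<Rightarrow> 0 | K \<Rightarrow> 0) | RR2 \<Rightarrow> (case c1 of E \<Rightarrow> 0 | I \<Rightarrow> 0 | J \<Rightarrow> (-1/4) | K \<Rightarrow> 0)) | I \<Rightarrow> (case r of RR1 \<Rightarrow> (case c1 of E \<Rightarrow> 0 | I \<Rightarrow> 0 | J \<Rightarrow> 0 | K \<Rightarrow> 0) | RR2 \<Rightarrow> (case c1 of E \<Rightarrow> 0 | I \<Rightarrow> 0 | J \<Rightarrow> 0 | K \<Rightarrow> (1/4))) | J \<Rightarrow> (case r of RR1 \<Rightarrow> (case c1 of E \<Rightarrow> 0 | I \<Rightarrow> 0 | J \<Rightarrow> 0 | K \<Rightarrow> 0) | RR2 \<Rightarrow> (case c1 of E \<Rightarrow> (-1/4) | I \<Rightarrow> 0 | J \<Rightarrow> 0 | K \<Rightarrow> 0)) | K \<Rightarrow> (case r of RR1 \<Rightarrow> (case c1 of E \<Rightarrow> 0 | I \<Rightarrow> 0 | J \<Rightarrow> 0 | K \<Rightarrow> 0) | RR2 \<Rightarrow> (case c1 of E \<Rightarrow> 0 | I \<Rightarrow> (-1/4) | J \<Rightarrow> 0 | K \<Rightarrow> 0)))"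

definition tB7 :: "qb \<Rightarrow> rlet \<Rightarrow> qb \<Rightarrow> real" where
  "tB7 c0 r c1 = (case c0 of E \<Rightarrow> (case r of RR1 \<Rightarrow> (case c1 of E \<Rightarrow> 0 | I \<Rightarrow> 0 | J \<Rightarrow> (1/4) | K \<Rightarrow> 0) | RR2 \<Rightarrow> (case c1 of E \<Rightarrow> 0 | I \<Rightarrow> (1/4) | J \<Rightarrow> 0 | K \<Rightarrow> 0)) | I \<Rightarrow> (case r of RR1 \<Rightarrow> (case c1 of E \<Rightarrow> 0 | I \<Rightarrow> 0 | J \<Rightarrow> 0 | K \<Rightarrow> (-1/4)) | RR2 \<Rightarrow> (case c1 of E \<Rightarrow> (1/4) | I \<Rightarrow> 0 | J \<Rightarrow> 0 | K \<Rightarrow> 0)) | J \<Rightarrow> (case r of RR1 \<Rightarrow> (case c1 of E \<Rightarrow> (1/4) | I \<Rightarrow> 0 | J \<Rightarrow> 0 | K \<Rightarrow> 0) | RR2 \<Rightarrow> (case c1 of E \<Rightarrow> 0 | I \<Rightarrow> 0 | J \<Rightarrow> 0 | K \<Rightarrow> (1/4))) | K \<Rightarrow> (case r of RR1 \<Rightarrow> (case c1 of E \<Rightarrow> 0 | I \<Rightarrow> (1/4) | J \<Rightarrow> 0 | K \<Rightarrow> 0) | RR2 \<Rightarrow> (case c1 of E \<Rightarrow> 0 | I \<Rightarrow> 0 | J \<Rightarrow> (-1/4) | K \<Rightarrow> 0)))"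

definition tA8 :: "qb \<Rightarrow> rlet \<Rightarrow> qb \<Rightarrow> real" where
  "tA8 c0 r c1 = (case c0 of E \<Rightarrow> (case r of RR1 \<Rightarrow> (case c1 of E \<Rightarrow> 0 | I \<Rightarrow> 0 | J \<Rightarrow> 0 | K \<Rightarrow> 0) | RR2 \<Rightarrow> (case c1 of E \<Rightarrow> 0 | I \<Rightarrow> 0 | J \<Rightarrow> (-1/4) | K \<Rightarrow> 0)) | I \<Rightarrow> (case r of RR1 \<Rightarrow> (case c1 of E \<Rightarrow> 0 | I \<Rightarrow> 0 | J \<Rightarrow> 0 | K \<Rightarrow> 0) | RR2 \<Rightarrow> (case c1 of E \<Rightarrow> 0 | I \<Rightarrow> 0 | J \<Rightarrow> 0 | K \<Rightarrow> (1/4))) | J \<Rightarrow> (case r of RR1 \<Rightarrow> (case c1 of E \<Rightarrow> 0 | I \<Rightarrow> 0 | J \<Rightarrow> 0 | K \<Rightarrow> 0) | RR2 \<Rightarrow> (case c1 of E \<Rightarrow> (1/4) | I \<Rightarrow> 0 | J \<Rightarrow> 0 | K \<Rightarrow> 0)) | K \<Rightarrow> (case r of RR1 \<Rightarrow> (case c1 of E \<Rightarrow> 0 | I \<Rightarrow> 0 | J \<Rightarrow> 0 | K \<Rightarrow> 0) | RR2 \<Rightarrow> (case c1 of E \<Rightarrow> 0 | I \<Rightarrow> (1/4) | J \<Rightarrow> 0 | K \<Rightarrow> 0)))"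

definition tB8 :: "qb \<Rightarrow> rlet \<Rightarrow> qb \<Rightarrow> real" where
  "tB8 c0 r c1 = (case c0 of E \<Rightarrow> (case r of RR1 \<Rightarrow> (case c1 of E \<Rightarrow> 0 | I \<Rightarrow> 0 | J \<Rightarrow> (1/4) | K \<Rightarrow> 0) | RR2 \<Rightarrow> (case c1 of E \<Rightarrow> 0 | I \<Rightarrow> (1/4) | J \<Rightarrow> 0 | K \<Rightarrow> 0)) | I \<Rightarrow> (case r of RR1 \<Rightarrow> (case c1 of E \<Rightarrow> 0 | I \<Rightarrow> 0 | J \<Rightarrow> 0 | K \<Rightarrow> (-1/4)) | RR2 \<Rightarrow> (case c1 of E \<Rightarrow> (-1/4) | I \<Rightarrow> 0 | J \<Rightarrow> 0 | K \<Rightarrow> 0)) | J \<Rightarrow> (case r of RR1 \<Rightarrow> (case c1 of E \<Rightarrow> (-1/4) | I \<Rightarrow> 0 | J \<Rightarrow> 0 | K \<Rightarrow> 0) | RR2 \<Rightarrow> (case c1 of E \<Rightarrow> 0 | I \<Rightarrow> 0 | J \<Rightarrow> 0 | K \<Rightarrow> (1/4))) | K \<Rightarrow> (case r of RR1 \<Rightarrow> (case c1 of E \<Rightarrow> 0 | I \<Rightarrow> (-1/4) | J \<Rightarrow> 0 | K \<Rightarrow> 0) | RR2 \<Rightarrow> (case c1 of E \<Rightarrow> 0 | I \<Rightarrow> 0 | J \<Rightarrow> (1/4) | K \<Rightarrow> 0)))"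

definition kap1 :: "qb \<Rightarrow> qb \<Rightarrow> rlet \<Rightarrow> qb \<Rightarrow> real" where
  "kap1 e c0 r c1 = (case e of E \<Rightarrow> (case c0 of E \<Rightarrow> (case r of RR1 \<Rightarrow> (case c1 of E \<Rightarrow> 0 | I \<Rightarrow> (-1) | J \<Rightarrow> 0 | K \<Rightarrow> 0) | RR2 \<Rightarrow> (case c1 of E \<Rightarrow> 0 | I \<Rightarrow> 0 | J \<Rightarrow> 1 | K \<Rightarrow> 0)) | I \<Rightarrow> (case r of RR1 \<Rightarrow> (case c1 of E \<Rightarrow> (-1) | I \<Rightarrow> 0 | J \<Rightarrow> 0 | K \<Rightarrow> 0) | RR2 \<Rightarrow> (case c1 of E \<Rightarrow> 0 | I \<Rightarrow> 0 | J \<Rightarrow> 0 | K \<Rightarrow> (-1))) | J \<Rightarrow> (case r of RR1 \<Rightarrow> (case c1 of E \<Rightarrow> 0 | I \<Rightarrow> 0 | J \<Rightarrow> 0 | K \<Rightarrow> (-1)) | RR2 \<Rightarrow> (case c1 of E \<Rightarrow> 1 | I \<Rightarrow> 0 | J \<Rightarrow> 0 | K \<Rightarrow> 0)) | K \<Rightarrow> (case r of RR1 \<Rightarrow> (case c1 of E \<Rightarrow> 0 | I \<Rightarrow> 0 | J \<Rightarrow> 1 | K \<Rightarrow> 0) | RR2 \<Rightarrow> (case c1 of E \<Rightarrow> 0 | I \<Rightarrow> 1 | J \<Rightarrow> 0 | K \<Rightarrow> 0))) | I \<Rightarrow> (case c0 of E \<Rightarrow> (case r of RR1 \<Rightarrow>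 (case c1 of E \<Rightarrow> 1 | I \<Rightarrow> 0 | J \<Rightarrow> 0 | K \<Rightarrow> 0) | RR2 \<Rightarrow> (case c1 of E \<Rightarrow> 0 | I \<Rightarrow> 0 | J \<Rightarrow> 0 | K \<Rightarrow> (-1))) | I \<Rightarrow> (case r of RR1 \<Rightarrow> (case c1 of E \<Rightarrow> 0 | I \<Rightarrow> (-1) | J \<Rightarrow> 0 | K \<Rightarrow> 0) | RR2 \<Rightarrow> (case c1 of E \<Rightarrow> 0 | I \<Rightarrow> 0 | J \<Rightarrow> (-1) | K \<Rightarrow> 0)) | J \<Rightarrow> (case r of RR1 \<Rightarrow> (case c1 of E \<Rightarrow> 0 | I \<Rightarrow> 0 | J \<Rightarrow> (-1) | K \<Rightarrow> 0) | RR2 \<Rightarrow> (case c1 of E \<Rightarrow> 0 | I \<Rightarrow> 1 | J \<Rightarrow> 0 | K \<Rightarrow> 0)) | K \<Rightarrow> (case r of RR1 \<Rightarrow> (case c1 of E \<Rightarrow> 0 | I \<Rightarrow> 0 | J \<Rightarrow> 0 | K \<Rightarrow> (-1)) | RR2 \<Rightarrow> (case c1 of E \<Rightarrow> (-1) | I \<Rightarrow> 0 | J \<Rightarrow> 0 | K \<Rightarrow> 0))) | J \<Rightarrow> (case c0 of E \<Rightarrow> (case r of RR1 \<Rightarrow> (case c1 of E \<Rightarrow> 0 | I \<Rightarrow> 0 | J \<Rightarrow> 0 | K \<Rightarrow> (-1)) | RR2 \<Rightarrow> (case c1 of E \<Rightarrow> (-1) | I \<Rightarrow> 0 | J \<Rightarrow>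 0 | K \<Rightarrow> 0)) | I \<Rightarrow> (case r of RR1 \<Rightarrow> (case c1 of E \<Rightarrow> 0 | I \<Rightarrow> 0 | J \<Rightarrow> (-1) | K \<Rightarrow> 0) | RR2 \<Rightarrow> (case c1 of E \<Rightarrow> 0 | I \<Rightarrow> 1 | J \<Rightarrow> 0 | K \<Rightarrow> 0)) | J \<Rightarrow> (case r of RR1 \<Rightarrow> (case c1 of E \<Rightarrow> 0 | I \<Rightarrow> 1 | J \<Rightarrow> 0 | K \<Rightarrow> 0) | RR2 \<Rightarrow> (case c1 of E \<Rightarrow> 0 | I \<Rightarrow> 0 | J \<Rightarrow> 1 | K \<Rightarrow> 0)) | K \<Rightarrow> (case r of RR1 \<Rightarrow> (case c1 of E \<Rightarrow> (-1) | I \<Rightarrow> 0 | J \<Rightarrow> 0 | K \<Rightarrow> 0) | RR2 \<Rightarrow> (case c1 of E \<Rightarrow> 0 | I \<Rightarrow> 0 | J \<Rightarrow> 0 | K \<Rightarrow> 1))) | K \<Rightarrow> (case c0 of E \<Rightarrow> (case r of RR1 \<Rightarrow> (case c1 of E \<Rightarrow> 0 | I \<Rightarrow> 0 | J \<Rightarrow> 1 | K \<Rightarrow> 0) | RR2 \<Rightarrow> (case c1 of E \<Rightarrow> 0 | I \<Rightarrow> 1 | J \<Rightarrow> 0 | K \<Rightarrow> 0)) | I \<Rightarrow> (case r of RR1 \<Rightarrow> (case c1 of E \<Rightarrow> 0 | I \<Rightarrow> 0 | J \<Rightarrow> 0 | K \<Rightarrow> (-1)) | RR2 \<Rightarrow>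 (case c1 of E \<Rightarrow> 1 | I \<Rightarrow> 0 | J \<Rightarrow> 0 | K \<Rightarrow> 0)) | J \<Rightarrow> (case r of RR1 \<Rightarrow> (case c1 of E \<Rightarrow> 1 | I \<Rightarrow> 0 | J \<Rightarrow> 0 | K \<Rightarrow> 0) | RR2 \<Rightarrow> (case c1 of E \<Rightarrow> 0 | I \<Rightarrow> 0 | J \<Rightarrow> 0 | K \<Rightarrow> 1)) | K \<Rightarrow> (case r of RR1 \<Rightarrow> (case c1 of E \<Rightarrow> 0 | I \<Rightarrow> 1 | J \<Rightarrow> 0 | K \<Rightarrow> 0) | RR2 \<Rightarrow> (case c1 of E \<Rightarrow> 0 | I \<Rightarrow> 0 | J \<Rightarrow> (-1) | K \<Rightarrow> 0))))"

definition kap2 :: "qb \<Rightarrow> qb \<Rightarrow> rlet \<Rightarrow> qb \<Rightarrow> real" where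
  "kap2 e c0 r c1 = (case e of E \<Rightarrow> (case c0 of E \<Rightarrow> (case r of RR1 \<Rightarrow> (case c1 of E \<Rightarrow> 0 | I \<Rightarrow> (-1) | J \<Rightarrow> 0 | K \<Rightarrow> 0) | RR2 \<Rightarrow> (case c1 of E \<Rightarrow> 0 | I \<Rightarrow> 0 | J \<Rightarrow> (-1) | K \<Rightarrow> 0)) | I \<Rightarrow> (case r of RR1 \<Rightarrow> (case c1 of E \<Rightarrow> (-1) | I \<Rightarrow> 0 | J \<Rightarrow> 0 | K \<Rightarrow> 0) | RR2 \<Rightarrow> (case c1 of E \<Rightarrow> 0 | I \<Rightarrow> 0 | J \<Rightarrow> 0 | K \<Rightarrow> 1)) | J \<Rightarrow> (case r of RR1 \<Rightarrow> (case c1 of E \<Rightarrow> 0 | I \<Rightarrow> 0 | J \<Rightarrow> 0 | K \<Rightarrow> (-1)) | RR2 \<Rightarrow> (case c1 of E \<Rightarrow> (-1) | I \<Rightarrow> 0 | J \<Rightarrow> 0 | K \<Rightarrow> 0)) | K \<Rightarrow> (case r of RR1 \<Rightarrow> (case c1 of E \<Rightarrow> 0 | I \<Rightarrow> 0 | J \<Rightarrow> 1 | K \<Rightarrow> 0) | RR2 \<Rightarrow> (case c1 of E \<Rightarrow> 0 | I \<Rightarrow> (-1) | J \<Rightarrow> 0 | K \<Rightarrow> 0))) | I \<Rightarrow> (case c0 of E \<Rightarrow> (case r of RR1 \<Rightarrow> (case c1 of E \<Rightarrow> 1 | I \<Rightarrow> 0 | J \<Rightarrow> 0 | K \<Rightarrow>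 0) | RR2 \<Rightarrow> (case c1 of E \<Rightarrow> 0 | I \<Rightarrow> 0 | J \<Rightarrow> 0 | K \<Rightarrow> 1)) | I \<Rightarrow> (case r of RR1 \<Rightarrow> (case c1 of E \<Rightarrow> 0 | I \<Rightarrow> (-1) | J \<Rightarrow> 0 | K \<Rightarrow> 0) | RR2 \<Rightarrow> (case c1 of E \<Rightarrow> 0 | I \<Rightarrow> 0 | J \<Rightarrow> 1 | K \<Rightarrow> 0)) | J \<Rightarrow> (case r of RR1 \<Rightarrow> (case c1 of E \<Rightarrow> 0 | I \<Rightarrow> 0 | J \<Rightarrow> (-1) | K \<Rightarrow> 0) | RR2 \<Rightarrow> (case c1 of E \<Rightarrow> 0 | I \<Rightarrow> (-1) | J \<Rightarrow> 0 | K \<Rightarrow> 0)) | K \<Rightarrow> (case r of RR1 \<Rightarrow> (case c1 of E \<Rightarrow> 0 | I \<Rightarrow> 0 | J \<Rightarrow> 0 | K \<Rightarrow> (-1)) | RR2 \<Rightarrow> (case c1 of E \<Rightarrow> 1 | I \<Rightarrow> 0 | J \<Rightarrow> 0 | K \<Rightarrow> 0))) | J \<Rightarrow> (case c0 of E \<Rightarrow> (case r of RR1 \<Rightarrow> (case c1 of E \<Rightarrow> 0 | I \<Rightarrow> 0 | J \<Rightarrow> 0 | K \<Rightarrow> (-1)) | RR2 \<Rightarrow> (case c1 of E \<Rightarrow> 1 | I \<Rightarrow> 0 | J \<Rightarrow> 0 | K \<Rightarrow> 0)) | I \<Rightarrow> (case r of RR1 \<Rightarrow> (case c1 of E \<Rightarrow>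 0 | I \<Rightarrow> 0 | J \<Rightarrow> (-1) | K \<Rightarrow> 0) | RR2 \<Rightarrow> (case c1 of E \<Rightarrow> 0 | I \<Rightarrow> (-1) | J \<Rightarrow> 0 | K \<Rightarrow> 0)) | J \<Rightarrow> (case r of RR1 \<Rightarrow> (case c1 of E \<Rightarrow> 0 | I \<Rightarrow> 1 | J \<Rightarrow> 0 | K \<Rightarrow> 0) | RR2 \<Rightarrow> (case c1 of E \<Rightarrow> 0 | I \<Rightarrow> 0 | J \<Rightarrow> (-1) | K \<Rightarrow> 0)) | K \<Rightarrow> (case r of RR1 \<Rightarrow> (case c1 of E \<Rightarrow> (-1) | I \<Rightarrow> 0 | J \<Rightarrow> 0 | K \<Rightarrow> 0) | RR2 \<Rightarrow> (case c1 of E \<Rightarrow> 0 | I \<Rightarrow> 0 | J \<Rightarrow> 0 | K \<Rightarrow> (-1)))) | K \<Rightarrow> (case c0 of E \<Rightarrow> (case r of RR1 \<Rightarrow> (case c1 of E \<Rightarrow> 0 | I \<Rightarrow> 0 | J \<Rightarrow> 1 | K \<Rightarrow> 0) | RR2 \<Rightarrow> (case c1 of E \<Rightarrow> 0 | I \<Rightarrow> (-1) | J \<Rightarrow> 0 | K \<Rightarrow> 0)) | I \<Rightarrow> (case r of RR1 \<Rightarrow> (case c1 of E \<Rightarrow> 0 | I \<Rightarrow> 0 | J \<Rightarrow> 0 | K \<Rightarrow> (-1)) | RR2 \<Rightarrow> (case c1 of E \<Rightarrow> (-1) | I \<Rightarrow> 0 | J \<Rightarrow> 0 | K \<Rightarrow>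 0)) | J \<Rightarrow> (case r of RR1 \<Rightarrow> (case c1 of E \<Rightarrow> 1 | I \<Rightarrow> 0 | J \<Rightarrow> 0 | K \<Rightarrow> 0) | RR2 \<Rightarrow> (case c1 of E \<Rightarrow> 0 | I \<Rightarrow> 0 | J \<Rightarrow> 0 | K \<Rightarrow> (-1))) | K \<Rightarrow> (case r of RR1 \<Rightarrow> (case c1 of E \<Rightarrow> 0 | I \<Rightarrow> 1 | J \<Rightarrow> 0 | K \<Rightarrow> 0) | RR2 \<Rightarrow> (case c1 of E \<Rightarrow> 0 | I \<Rightarrow> 0 | J \<Rightarrow> 1 | K \<Rightarrow> 0))))"

lemmas tabdefs = tA1_def tB1_def tA2_def tB2_def tA3_def tB3_def tA4_def tB4_def tA5_def tB5_def tA6_def tB6_def tA7_def tB7_def tA8_def tB8_def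

definition tabA :: "nat \<Rightarrow> qb \<Rightarrow> rlet \<Rightarrow> qb \<Rightarrow> real" where
  "tabA k = (if k = 1 then tA1 else if k = 2 then tA2 else if k = 3 then tA3 else if k = 4 then tA4
     else if k = 5 then tA5 else if k = 6 then tA6 else if k = 7 then tA7 else tA8)"
definition tabB :: "nat \<Rightarrow> qb \<Rightarrow> rlet \<Rightarrow> qb \<Rightarrow> real" where
  "tabB k = (if k = 1 then tB1 else if k = 2 then tB2 else if k = 3 then tB3 else if k = 4 then tB4
     else if k = 5 then tB5 else if k = 6 then tB6 else if k = 7 then tB7 else tB8)"

lemma Lm_E: "Lm E y = y"
proof (rule ext)
  fix m :: mon show "Lm E y m = y m" by (cases m; cases "fst m") (auto simp: Lm_def)
qed

lemma bmul_one_left: "bmul bone y = y"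
  by (simp add: bone_def bmul_basis_left Lm_E)

lemma rotQ1: "fst (Rot (Q1D, Q2D)) = (bQ1, bQ2)"
  by (auto simp: Rot_def dadd_def dmul_def tt_def Q1D_def Q2D_def demb_def bmul_zero_left bmul_zero_right
      bmul_one_left) (auto simp: badd_def bzero_def)
lemma rotQ2: "snd (Rot (Q1D, Q2D)) = (bQ2, bscale (-1) bQ1)"
  by (auto simp: Rot_def dadd_def dsub_def dneg_def dscale_def dmul_def tt_def Q1D_def Q2D_def demb_def bmul_zero_left bmul_zero_right
      bmul_one_left) (auto simp: badd_def bzero_def bscale_def)
lemma rotR1: "dsub (fst (Rot (A1D, A2D))) (fst (Rot (Q1D, Q2D))) = (bR1, bR2)"
  by (auto simp: Rot_def dadd_def dsub_def dneg_def dscale_def dmul_def tt_def Q1D_def Q2D_def A1D_def A2D_def demb_def bmul_zero_left bmul_zero_right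
      bmul_one_left) (auto simp: badd_def bzero_def bscale_def)
lemma rotR2: "dsub (snd (Rot (A1D, A2D))) (snd (Rot (Q1D, Q2D))) = (bR2, bscale (-1) bR1)"
  by (auto simp: Rot_def dadd_def dsub_def dneg_def dscale_def dmul_def tt_def Q1D_def Q2D_def A1D_def A2D_def demb_def bmul_zero_left bmul_zero_right
      bmul_one_left) (auto simp: badd_def bzero_def bscale_def)
lemma unR1: "dsub A1D Q1D = (bR1, bzero)"
  by (auto simp: dadd_def dsub_def dneg_def dscale_def Q1D_def A1D_def demb_def badd_def bzero_def bscale_def)
lemma unR2: "dsub A2D Q2D = (bR2, bzero)"
  by (auto simp: dadd_def dsub_def dneg_def dscale_def Q2D_def A2D_def demb_def badd_def bzero_def bscale_def)

lemma deg1_cong: "(\<And>a b c. t a b c = u a b c) \<Longrightarrow> deg1 t = deg1 u"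
  by (rule arg_cong[where f=deg1]) (intro ext)

lemma tL_eval: "tL d t c0 r c1 = fst (qmul d (snd (qmul d c0))) * t (snd (qmul d c0)) r c1"
  by (cases d; cases c0) (simp_all add: tL_def)
lemma tR_eval: "tR d t c0 r c1 = fst (qmul (snd (qmul c1 d)) d) * t c0 r (snd (qmul c1 d))"
  by (cases d; cases c1) (simp_all add: tR_def)

lemma bmul_z0r: "bmul x (deg1 (\<lambda>a b c. 0)) = deg1 (\<lambda>a b c. 0)"
  using bmul_zero_right[of x] by (simp add: bzero_deg1)
lemma bmul_z0l: "bmul (deg1 (\<lambda>a b c. 0)) x = deg1 (\<lambda>a b c. 0)"
  using bmul_zero_left[of x] by (simp add: bzero_deg1)

lemmas svsimps = bmul_z0r bmul_z0l splitvar_def qpart_def dmul_def dneg_def dscale_def dadd_def dsub_def Let_def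
  bmul_scale_left bmul_scale_right bmul_basis_left bmul_basis_right Lm_deg1 Rm_deg1 badd_deg1 bscale_deg1
  bzero_deg1 bR1_deg1 bR2_deg1 bQ1_def bQ2_def

lemma svR1: "splitvar (bQ1,bQ2) (bQ2, bscale (-1) bQ1) (bR1,bR2) (bR2, bscale (-1) bR1) 1 = (deg1 (tabA 1), deg1 (tabB 1))"
  apply (simp add: svsimps del: One_nat_def)
  apply (intro conjI deg1_cong)
  by (rename_tac a b c, case_tac a; case_tac b; case_tac c; simp add: tL_eval tR_eval tabA_def tabB_def tabdefs)+

lemma svU1: "splitvar (bQ1,bzero) (bQ2,bzero) (bR1,bzero) (bR2,bzero) 1 = (deg1 (tabA 1), bzero)"
  apply (simp add: svsimps del: One_nat_def)
  apply (intro conjI deg1_cong)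
  by (rename_tac a b c, case_tac a; case_tac b; case_tac c; simp add: tL_eval tR_eval tabA_def tabB_def tabdefs)+

lemma svR2: "splitvar (bQ1,bQ2) (bQ2, bscale (-1) bQ1) (bR1,bR2) (bR2, bscale (-1) bR1) 2 = (deg1 (tabA 2), deg1 (tabB 2))"
  apply (simp add: svsimps del: One_nat_def)
  apply (intro conjI deg1_cong)
  by (rename_tac a b c, case_tac a; case_tac b; case_tac c; simp add: tL_eval tR_eval tabA_def tabB_def tabdefs)+

lemma svU2: "splitvar (bQ1,bzero) (bQ2,bzero) (bR1,bzero) (bR2,bzero) 2 = (deg1 (tabA 2), bzero)"
  apply (simp add: svsimps del: One_nat_def)
  apply (intro conjI deg1_cong)
  by (rename_tac a b c, case_tac a; case_tac b; case_tac c; simp add: tL_eval tR_eval tabA_def tabB_def tabdefs)+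

lemma svR3: "splitvar (bQ1,bQ2) (bQ2, bscale (-1) bQ1) (bR1,bR2) (bR2, bscale (-1) bR1) 3 = (deg1 (tabA 3), deg1 (tabB 3))"
  apply (simp add: svsimps del: One_nat_def)
  apply (intro conjI deg1_cong)
  by (rename_tac a b c, case_tac a; case_tac b; case_tac c; simp add: tL_eval tR_eval tabA_def tabB_def tabdefs)+

lemma svU3: "splitvar (bQ1,bzero) (bQ2,bzero) (bR1,bzero) (bR2,bzero) 3 = (deg1 (tabA 3), bzero)"
  apply (simp add: svsimps del: One_nat_def)
  apply (intro conjI deg1_cong)
  by (rename_tac a b c, case_tac a; case_tac b; case_tac c; simp add: tL_eval tR_eval tabA_def tabB_def tabdefs)+

lemma svR4: "splitvar (bQ1,bQ2) (bQ2, bscale (-1) bQ1) (bR1,bR2) (bR2, bscale (-1) bR1) 4 = (deg1 (tabA 4), deg1 (tabB 4))"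
  apply (simp add: svsimps del: One_nat_def)
  apply (intro conjI deg1_cong)
  by (rename_tac a b c, case_tac a; case_tac b; case_tac c; simp add: tL_eval tR_eval tabA_def tabB_def tabdefs)+

lemma svU4: "splitvar (bQ1,bzero) (bQ2,bzero) (bR1,bzero) (bR2,bzero) 4 = (deg1 (tabA 4), bzero)"
  apply (simp add: svsimps del: One_nat_def)
  apply (intro conjI deg1_cong)
  by (rename_tac a b c, case_tac a; case_tac b; case_tac c; simp add: tL_eval tR_eval tabA_def tabB_def tabdefs)+

lemma svR5: "splitvar (bQ1,bQ2) (bQ2, bscale (-1) bQ1) (bR1,bR2) (bR2, bscale (-1) bR1) 5 = (deg1 (tabA 5), deg1 (tabB 5))"
  apply (simp add: svsimps del: One_nat_def)
  apply (intro conjI deg1_cong)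
  by (rename_tac a b c, case_tac a; case_tac b; case_tac c; simp add: tL_eval tR_eval tabA_def tabB_def tabdefs)+

lemma svU5: "splitvar (bQ1,bzero) (bQ2,bzero) (bR1,bzero) (bR2,bzero) 5 = (deg1 (tabA 5), bzero)"
  apply (simp add: svsimps del: One_nat_def)
  apply (intro conjI deg1_cong)
  by (rename_tac a b c, case_tac a; case_tac b; case_tac c; simp add: tL_eval tR_eval tabA_def tabB_def tabdefs)+

lemma svR6: "splitvar (bQ1,bQ2) (bQ2, bscale (-1) bQ1) (bR1,bR2) (bR2, bscale (-1) bR1) 6 = (deg1 (tabA 6), deg1 (tabB 6))"
  apply (simp add: svsimps del: One_nat_def)
  apply (intro conjI deg1_cong)
  by (rename_tac a b c, case_tac a; case_tac b; case_tac c; simp add: tL_eval tR_eval tabA_def tabB_def tabdefs)+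

lemma svU6: "splitvar (bQ1,bzero) (bQ2,bzero) (bR1,bzero) (bR2,bzero) 6 = (deg1 (tabA 6), bzero)"
  apply (simp add: svsimps del: One_nat_def)
  apply (intro conjI deg1_cong)
  by (rename_tac a b c, case_tac a; case_tac b; case_tac c; simp add: tL_eval tR_eval tabA_def tabB_def tabdefs)+

lemma svR7: "splitvar (bQ1,bQ2) (bQ2, bscale (-1) bQ1) (bR1,bR2) (bR2, bscale (-1) bR1) 7 = (deg1 (tabA 7), deg1 (tabB 7))"
  apply (simp add: svsimps del: One_nat_def)
  apply (intro conjI deg1_cong)
  by (rename_tac a b c, case_tac a; case_tac b; case_tac c; simp add: tL_eval tR_eval tabA_def tabB_def tabdefs)+

lemma svU7: "splitvar (bQ1,bzero) (bQ2,bzero) (bR1,bzero) (bR2,bzero) 7 = (deg1 (tabA 7), bzero)"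
  apply (simp add: svsimps del: One_nat_def)
  apply (intro conjI deg1_cong)
  by (rename_tac a b c, case_tac a; case_tac b; case_tac c; simp add: tL_eval tR_eval tabA_def tabB_def tabdefs)+

lemma svR8: "splitvar (bQ1,bQ2) (bQ2, bscale (-1) bQ1) (bR1,bR2) (bR2, bscale (-1) bR1) 8 = (deg1 (tabA 8), deg1 (tabB 8))"
  apply (simp add: svsimps del: One_nat_def)
  apply (intro conjI deg1_cong)
  by (rename_tac a b c, case_tac a; case_tac b; case_tac c; simp add: tL_eval tR_eval tabA_def tabB_def tabdefs)+

lemma svU8: "splitvar (bQ1,bzero) (bQ2,bzero) (bR1,bzero) (bR2,bzero) 8 = (deg1 (tabA 8), bzero)"
  apply (simp add: svsimps del: One_nat_def)
  apply (intro conjI deg1_cong)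
  by (rename_tac a b c, case_tac a; case_tac b; case_tac c; simp add: tL_eval tR_eval tabA_def tabB_def tabdefs)+

lemma k8: "k \<in> {1..8::nat} \<Longrightarrow> k = 1 \<or> k = 2 \<or> k = 3 \<or> k = 4 \<or> k = 5 \<or> k = 6 \<or> k = 7 \<or> k = 8"
  by auto

lemma svR: "k \<in> {1..8} \<Longrightarrow> splitvar (bQ1,bQ2) (bQ2, bscale (-1) bQ1) (bR1,bR2) (bR2, bscale (-1) bR1) k = (deg1 (tabA k), deg1 (tabB k))"
  using svR1 svR2 svR3 svR4 svR5 svR6 svR7 svR8 k8 by blast
lemma svU: "k \<in> {1..8} \<Longrightarrow> splitvar (bQ1,bzero) (bQ2,bzero) (bR1,bzero) (bR2,bzero) k = (deg1 (tabA k), bzero)"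
  using svU1 svU2 svU3 svU4 svU5 svU6 svU7 svU8 k8 by blast


lemma sum4: "sum f {E,I,J,K} = f E + f I + f J + f K"
  by (simp add: add.assoc)
lemma sum2: "sum f {RR1,RR2} = f RR1 + f RR2"
  by simp

definition kap :: "nat \<Rightarrow> qb \<Rightarrow> qb \<Rightarrow> rlet \<Rightarrow> qb \<Rightarrow> real" where
  "kap l = (if l = 1 then kap1 else kap2)"

definition Peel :: "nat \<Rightarrow> bel \<Rightarrow> bel" where
  "Peel l x m = (\<Sum>c0\<in>{E,I,J,K}. \<Sum>r\<in>{RR1,RR2}. \<Sum>c1\<in>{E,I,J,K}. kap l (fst m) c0 r c1 * x (c0, (r,c1) # snd m))"

definition G :: "nat \<Rightarrow> (qb \<Rightarrow> rlet \<Rightarrow> qb \<Rightarrow> real) \<Rightarrow> qb \<Rightarrow> qb \<Rightarrow> real" where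
  "G l t e e' = (\<Sum>c0\<in>{E,I,J,K}. \<Sum>r\<in>{RR1,RR2}. \<Sum>d\<in>{E,I,J,K}. kap l e c0 r (snd (qmul d e')) * fst (qmul d e') * t c0 r d)"

lemma Peel_bmul_deg1: "Peel l (bmul (deg1 t) y) m = (\<Sum>e'\<in>{E,I,J,K}. G l t (fst m) e' * y (e', snd m))"
  unfolding Peel_def G_def bmul_deg1_cons sum4 sum2
  by (simp add: algebra_simps)

lemma GA: "l \<in> {1,2} \<Longrightarrow> k \<in> {1..8} \<Longrightarrow> G l (tabA k) e e' = (if e = e' then Mtil k l else 0)"
  apply (simp only: G_def sum4 sum2)
  apply (drule k8)
  apply (elim disjE; simp only: insert_iff empty_iff simp_thms; elim disjE; cases e; cases e'; simp add: kap_def kap1_def kap2_def tabA_def tabdefs Mtil_def)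
  done

lemma GB: "l \<in> {1,2} \<Longrightarrow> k \<in> {1..8} \<Longrightarrow> G l (tabB k) e e' =
   (if l = 1 then -2 * Mtil k l else 0) * (if snd (qmul K e') = e then fst (qmul K e') else 0)"
  apply (simp only: G_def sum4 sum2)
  apply (drule k8)
  apply (elim disjE; simp only: insert_iff empty_iff simp_thms; elim disjE; cases e; cases e'; simp add: kap_def kap1_def kap2_def tabB_def tabdefs Mtil_def)
  done

lemma Peel_A: "l \<in> {1,2} \<Longrightarrow> k \<in> {1..8} \<Longrightarrow> Peel l (bmul (deg1 (tabA k)) y) = (\<lambda>m. Mtil k l * y m)"
  apply (rule ext)
  subgoal for m by (cases m; cases "fst m") (simp_all add: Peel_bmul_deg1 GA sum4)
  done

lemma Peel_B: "l \<in> {1,2} \<Longrightarrow> k \<in> {1..8} \<Longrightarrow> Peel l (bmul (deg1 (tabB k)) y) = (\<lambda>m. (if l = 1 then -2 * Mtil k l else 0) * Lm K y m)"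
  apply (rule ext)
  subgoal for m by (cases m; cases "fst m") (simp_all add: Peel_bmul_deg1 GB sum4 Lm_def algebra_simps)
  done

lemma Peel_LmK: "l \<in> {1,2} \<Longrightarrow> Peel l (Lm K y) = (\<lambda>m. - Lm K (Peel l y) m)"
  apply (rule ext)
  subgoal for m
    apply (cases m)
    apply (simp only: Peel_def Lm_def sum4 sum2 fst_conv snd_conv)
    apply (cases "fst m")
    by (auto simp: kap_def kap1_def kap2_def algebra_simps)
  done

lemma Peel_add: "Peel l (badd x y) = (\<lambda>m. Peel l x m + Peel l y m)"
  by (rule ext) (simp add: Peel_def badd_def sum4 sum2 algebra_simps)

lemma Peel_lin2: "Peel l (\<lambda>m. a * x m + b * y m) = (\<lambda>m. a * Peel l x m + b * Peel l y m)"
  by (rule ext) (simp add: Peel_def sum4 sum2 algebra_simps)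

fun Phi :: "nat list \<Rightarrow> qb \<Rightarrow> bel \<Rightarrow> real" where
  "Phi [] c x = x (c, [])"
| "Phi (l # v) c x = Phi v c (Peel l x)"

lemma Phi_lin2: "Phi v c (\<lambda>m. a * x m + b * y m) = a * Phi v c x + b * Phi v c y"
  by (induction v arbitrary: x y) (simp_all add: Peel_lin2)

lemma Phi_scale: "Phi v c (\<lambda>m. a * x m) = a * Phi v c x"
  using Phi_lin2[of v c a x 0 x] by simp

lemma Phi_zero: "Phi v c (\<lambda>m. 0) = 0"
  using Phi_scale[of v c 0 "\<lambda>m. 0"] by simp

lemma Phi_add: "Phi v c (\<lambda>m. x m + y m) = Phi v c x + Phi v c y"
  using Phi_lin2[of v c 1 x 1 y] by simp

lemma Phi_LmK: "set v \<subseteq> {1,2} \<Longrightarrow> Phi v K (Lm K y) = (-1)^length v * Phi v E y"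
proof (induction v arbitrary: y)
  case Nil
  then show ?case by (simp add: Lm_def sum4)
next
  case (Cons l v)
  then have l: "l \<in> {1,2}" and v: "set v \<subseteq> {1,2}" by auto
  have "Phi (l#v) K (Lm K y) = Phi v K (\<lambda>m. (-1) * Lm K (Peel l y) m)"
    using Peel_LmK[OF l] by simp
  also have "\<dots> = - Phi v K (Lm K (Peel l y))" by (simp only: Phi_scale) 
  also have "\<dots> = (-1)^length (l#v) * Phi (l#v) E y" using Cons.IH[OF v] by simp
  finally show ?case .
qed


lemma sum_swap4: "(\<Sum>a\<in>A. \<Sum>b\<in>B. \<Sum>c\<in>C. \<Sum>d\<in>D. f a b c d) = (\<Sum>d\<in>D. \<Sum>a\<in>A. \<Sum>b\<in>B. \<Sum>c\<in>C. f a b c d)"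
proof -
  have "(\<Sum>a\<in>A. \<Sum>b\<in>B. \<Sum>c\<in>C. \<Sum>d\<in>D. f a b c d) = (\<Sum>a\<in>A. \<Sum>b\<in>B. \<Sum>d\<in>D. \<Sum>c\<in>C. f a b c d)"
    by (rule sum.cong[OF refl], rule sum.cong[OF refl], rule sum.swap)
  also have "\<dots> = (\<Sum>a\<in>A. \<Sum>d\<in>D. \<Sum>b\<in>B. \<Sum>c\<in>C. f a b c d)"
    by (rule sum.cong[OF refl], rule sum.swap)
  also have "\<dots> = (\<Sum>d\<in>D. \<Sum>a\<in>A. \<Sum>b\<in>B. \<Sum>c\<in>C. f a b c d)" by (rule sum.swap)
  finally show ?thesis .
qed

lemma Rm_nil: "Rm d x (c,[]) = (\<Sum>c'\<in>{E,I,J,K}. if snd (qmul c' d) = c then fst (qmul c' d) * x (c',[]) else 0)"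
  by (simp add: Rm_def slot_def pre_def)

lemma Rm_one: "Rm d x (c0,[(r,c1)]) = (\<Sum>c'\<in>{E,I,J,K}. if snd (qmul c' d) = c1 then fst (qmul c' d) * x (c0,[(r,c')]) else 0)"
  by (simp add: Rm_def slot_def pre_def)

lemma Rm_cons: "rest \<noteq> [] \<Longrightarrow> Rm d x (c0,(r,c1)#rest) = (\<Sum>c'\<in>{E,I,J,K}. if snd (qmul c' d) = slot (e,rest) (length rest)
    then fst (qmul c' d) * x (c0, (r,c1) # snd (pre (e,rest) (length rest) c')) else 0)"
  by (cases rest) (simp_all add: Rm_def slot_def pre_def)

lemma Rm_cons2: "rest \<noteq> [] \<Longrightarrow> Rm d y (e,rest) = (\<Sum>c'\<in>{E,I,J,K}. if snd (qmul c' d) = slot (e,rest) (length rest)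
    then fst (qmul c' d) * y (e, snd (pre (e,rest) (length rest) c')) else 0)"
  by (cases rest) (simp_all add: Rm_def slot_def pre_def)

lemma Peel_Rm: "Peel l (Rm d x) = Rm d (Peel l x)"
proof (rule ext)
  fix m :: mon
  obtain e rest where m: "m = (e, rest)" by (cases m)
  show "Peel l (Rm d x) m = Rm d (Peel l x) m"
  proof (cases "rest = []")
    case True
    show ?thesis unfolding m True Peel_def Rm_one Rm_nil fst_conv snd_conv sum4 sum2
      by (cases "l = 1"; cases d; cases e) (simp_all add: kap_def kap1_def kap2_def)
  next
    case False
    let ?P = "\<lambda>c'. snd (qmul c' d) = slot (e,rest) (length rest)"
    let ?S = "\<lambda>c'. snd (pre (e,rest) (length rest) c')"
    have "Peel l (Rm d x) m = (\<Sum>c0\<in>{E,I,J,K}. \<Sum>r\<in>{RR1,RR2}. \<Sum>c1\<in>{E,I,J,K}. \<Sum>c'\<in>{E,I,J,K}.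
        kap l e c0 r c1 * (if ?P c' then fst (qmul c' d) * x (c0, (r,c1) # ?S c') else 0))"
      unfolding m Peel_def fst_conv snd_conv Rm_cons[OF False, of d x _ _ _ e] sum_distrib_left ..
    also have "\<dots> = (\<Sum>c'\<in>{E,I,J,K}. \<Sum>c0\<in>{E,I,J,K}. \<Sum>r\<in>{RR1,RR2}. \<Sum>c1\<in>{E,I,J,K}.
        kap l e c0 r c1 * (if ?P c' then fst (qmul c' d) * x (c0, (r,c1) # ?S c') else 0))"
      by (rule sum_swap4)
    also have "\<dots> = Rm d (Peel l x) m"
      unfolding m Rm_cons2[OF False]
    proof (rule sum.cong[OF refl])
      fix c' show "(\<Sum>c0\<in>{E,I,J,K}. \<Sum>r\<in>{RR1,RR2}. \<Sum>c1\<in>{E,I,J,K}.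
        kap l e c0 r c1 * (if ?P c' then fst (qmul c' d) * x (c0, (r,c1) # ?S c') else 0)) =
        (if ?P c' then fst (qmul c' d) * Peel l x (e, ?S c') else 0)"
      proof (cases "?P c'")
        case True
        then show ?thesis by (simp only: True simp_thms if_True Peel_def fst_conv snd_conv sum_distrib_left mult.left_commute)
      next
        case False
        then show ?thesis by (simp only: if_False mult_zero_right sum.neutral_const)
      qed
    qed
    finally show ?thesis .
  qed
qed

lemma Phi_Rm: "Phi v c (Rm d x) = (\<Sum>c'\<in>{E,I,J,K}. if snd (qmul c' d) = c then fst (qmul c' d) * Phi v c' x else 0)"
  by (induction v arbitrary: x) (simp_all add: Rm_nil Peel_Rm)

lemma Phi_local: "(\<And>m. length (snd m) = length v \<Longrightarrow> x m = x' m) \<Longrightarrow> Phi v c x = Phi v c x'"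
proof (induction v arbitrary: x x')
  case Nil
  then show ?case by simp
next
  case (Cons l v)
  have h: "Peel l x m = Peel l x' m" if "length (snd m) = length v" for m
    unfolding Peel_def using Cons.prems that by simp
  show ?case by (simp only: Phi.simps) (rule Cons.IH, rule h)
qed

lemma Phi_sum: "finite W \<Longrightarrow> Phi v c (\<lambda>m. \<Sum>w\<in>W. f w * g w m) = (\<Sum>w\<in>W. f w * Phi v c (g w))"
proof (induction W rule: finite_induct)
  case empty
  then show ?case by (simp add: Phi_zero)
next
  case (insert a W)
  have "Phi v c (\<lambda>m. \<Sum>w\<in>insert a W. f w * g w m) = Phi v c (\<lambda>m. f a * g a m + 1 * (\<Sum>w\<in>W. f w * g w m))"
    using insert.hyps by simp
  also have "\<dots> = f a * Phi v c (g a) + 1 * Phi v c (\<lambda>m. \<Sum>w\<in>W. f w * g w m)"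
    by (rule Phi_lin2)
  finally show ?case using insert by simp
qed

lemma finite_words: "finite (words N)"
  unfolding words_def by (rule finite_lists_length_le) simp

lemma Phi_deval: "Phi v c (\<lambda>m. \<Sum>w\<in>words (length (snd m) + 1). f w * g w m) = (\<Sum>w\<in>words (length v + 1). f w * Phi v c (g w))"
proof -
  have "Phi v c (\<lambda>m. \<Sum>w\<in>words (length (snd m) + 1). f w * g w m) = Phi v c (\<lambda>m. \<Sum>w\<in>words (length v + 1). f w * g w m)"
    by (rule Phi_local) simp
  also have "\<dots> = (\<Sum>w\<in>words (length v + 1). f w * Phi v c (g w))"
    by (rule Phi_sum[OF finite_words])
  finally show ?thesis .
qed


fun Mw :: "nat list \<Rightarrow> nat list \<Rightarrow> real" where
  "Mw [] [] = 1"
| "Mw (k#w) (l#v) = Mtil k l * Mw w v"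
| "Mw [] (l#v) = 0"
| "Mw (k#w) [] = 0"

fun sv :: "nat list \<Rightarrow> int" where
  "sv [] = 0"
| "sv (l#v) = (if l = 1 then (-1)^length v else 0) + sv v"

lemma Mw_len: "length w \<noteq> length v \<Longrightarrow> Mw w v = 0"
  by (induction w v rule: Mw.induct) auto

lemma Mw_prod: "length w = length v \<Longrightarrow> Mw w v = (\<Prod>j<length v. Mtil (w!j) (v!j))"
proof (induction w v rule: Mw.induct)
  case (2 k w l v)
  then show ?case by (simp del: prod.lessThan_Suc add: prod.lessThan_Suc_shift)
qed auto

lemma Peel_bone: "Peel l bone = (\<lambda>m. 0)"
  by (rule ext) (simp add: Peel_def bone_def bbasis_def)

lemma DA:
  assumes hA: "\<And>k. k \<in> {1..8} \<Longrightarrow> fst (xs k) = deg1 (tabA k)"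
  shows "set w \<subseteq> {1..8} \<Longrightarrow> set v \<subseteq> {1,2} \<Longrightarrow> Phi v E (fst (dprod xs w)) = Mw w v"
proof (induction w arbitrary: v)
  case Nil
  show ?case
  proof (cases v)
    case Nil
    then show ?thesis by (simp add: dunit_def bone_def bbasis_def)
  next
    case (Cons l v')
    then show ?thesis by (simp add: dunit_def Peel_bone Phi_zero)
  qed
next
  case (Cons k w)
  have k: "k \<in> {1..8}" and w: "set w \<subseteq> {1..8}" using Cons.prems by auto
  have eq: "fst (dmul (xs k) (dprod xs w)) = bmul (deg1 (tabA k)) (fst (dprod xs w))"
    by (simp add: dmul_def hA[OF k])
  show ?case
  proof (cases v)
    case Nil
    then show ?thesis by (simp add: eq bmul_deg1_nil)
  next
    case (Cons l v')
    then have l: "l \<in> {1,2}" and v': "set v' \<subseteq> {1,2}" using Cons.prems by auto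
    show ?thesis using Cons
      by (simp add: eq Peel_A[OF l k] Phi_scale Cons.IH[OF w v'])
  qed
qed

lemma Phi_badd: "Phi v c (badd x y) = Phi v c x + Phi v c y"
  unfolding badd_def by (rule Phi_add)

lemma Phi_bzero: "Phi v c bzero = 0"
  unfolding bzero_def by (rule Phi_zero)

lemma DB:
  assumes hA: "\<And>k. k \<in> {1..8} \<Longrightarrow> fst (xs k) = deg1 (tabA k)"
    and hB: "\<And>k. k \<in> {1..8} \<Longrightarrow> snd (xs k) = deg1 (tabB k)"
  shows "set w \<subseteq> {1..8} \<Longrightarrow> set v \<subseteq> {1,2} \<Longrightarrow> Phi v K (snd (dprod xs w)) = -2 * of_int (sv v) * Mw w v"
proof (induction w arbitrary: v)
  case Nil
  then show ?case
    by (cases v) (simp_all add: dunit_def Phi_bzero)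
next
  case (Cons k w)
  have k: "k \<in> {1..8}" and w: "set w \<subseteq> {1..8}" using Cons.prems by auto
  have eq: "snd (dmul (xs k) (dprod xs w)) = badd (bmul (deg1 (tabA k)) (snd (dprod xs w))) (bmul (deg1 (tabB k)) (fst (dprod xs w)))"
    by (simp add: dmul_def hA[OF k] hB[OF k])
  show ?case
  proof (cases v)
    case Nil
    then show ?thesis by (simp add: eq bmul_deg1_nil badd_def)
  next
    case (Cons l v')
    then have l: "l \<in> {1,2}" and v': "set v' \<subseteq> {1,2}" using Cons.prems by auto
    have "Phi v K (snd (dprod xs (k#w))) = Phi v' K (\<lambda>m. Mtil k l * snd (dprod xs w) m + (if l = 1 then -2 * Mtil k l else 0) * Lm K (fst (dprod xs w)) m)"
      by (simp add: Cons eq Peel_add Peel_A[OF l k] Peel_B[OF l k])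
    also have "\<dots> = Mtil k l * Phi v' K (snd (dprod xs w)) + (if l = 1 then -2 * Mtil k l else 0) * ((-1)^length v' * Phi v' E (fst (dprod xs w)))"
      by (simp only: Phi_lin2 Phi_LmK[OF v'])
    also have "\<dots> = Mtil k l * (-2 * of_int (sv v') * Mw w v') + (if l = 1 then -2 * Mtil k l else 0) * ((-1)^length v' * Mw w v')"
      by (simp only: Cons.IH[OF w v'] DA[OF hA w v'])
    also have "\<dots> = -2 * of_int (sv v) * Mw (k#w) v"
      using Cons by (cases "l = 1") (simp_all add: algebra_simps)
    finally show ?thesis .
  qed
qed

lemma words_sub: "w \<in> words N \<Longrightarrow> set w \<subseteq> {1..8}"
  by (simp add: words_def)

lemma sum_ptilde: "(\<Sum>w\<in>words (length v + 1). f w * Mw w v) = ptilde f v"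
proof -
  let ?S = "{w. set w \<subseteq> {1..8} \<and> length w = length v}"
  have "(\<Sum>w\<in>words (length v + 1). f w * Mw w v) = (\<Sum>w\<in>?S. f w * Mw w v)"
    by (rule sum.mono_neutral_right[OF finite_words]) (auto simp: words_def Mw_len)
  also have "\<dots> = ptilde f v"
    unfolding ptilde_def by (rule sum.cong) (auto simp: Mw_prod)
  finally show ?thesis .
qed

lemma PhiF:
  assumes hA: "\<And>k. k \<in> {1..8} \<Longrightarrow> fst (xs k) = deg1 (tabA k)" and v: "set v \<subseteq> {1,2}"
  shows "Phi v E (fst (deval f xs)) = ptilde f v"
proof -
  have "Phi v E (fst (deval f xs)) = (\<Sum>w\<in>words (length v + 1). f w * Phi v E (fst (dprod xs w)))"
    unfolding deval_def fst_conv by (rule Phi_deval)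
  also have "\<dots> = (\<Sum>w\<in>words (length v + 1). f w * Mw w v)"
  proof (rule sum.cong[OF refl])
    fix w assume "w \<in> words (length v + 1)"
    then have sw: "set w \<subseteq> {1..8}" by (rule words_sub)
    show "f w * Phi v E (fst (dprod xs w)) = f w * Mw w v" using DA[OF hA sw v] by simp
  qed
  also have "\<dots> = ptilde f v" by (rule sum_ptilde)
  finally show ?thesis .
qed

lemma PhiS:
  assumes hA: "\<And>k. k \<in> {1..8} \<Longrightarrow> fst (xs k) = deg1 (tabA k)"
    and hB: "\<And>k. k \<in> {1..8} \<Longrightarrow> snd (xs k) = deg1 (tabB k)" and v: "set v \<subseteq> {1,2}"
  shows "Phi v K (snd (deval f xs)) = -2 * of_int (sv v) * ptilde f v"
proof -
  have "Phi v K (snd (deval f xs)) = (\<Sum>w\<in>words (length v + 1). f w * Phi v K (snd (dprod xs w)))"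
    unfolding deval_def snd_conv by (rule Phi_deval)
  also have "\<dots> = (\<Sum>w\<in>words (length v + 1). -2 * of_int (sv v) * (f w * Mw w v))"
  proof (rule sum.cong[OF refl])
    fix w assume "w \<in> words (length v + 1)"
    then have sw: "set w \<subseteq> {1..8}" by (rule words_sub)
    show "f w * Phi v K (snd (dprod xs w)) = -2 * of_int (sv v) * (f w * Mw w v)" using DB[OF hA hB sw v] by simp
  qed
  also have "\<dots> = -2 * of_int (sv v) * (\<Sum>w\<in>words (length v + 1). f w * Mw w v)"
    by (simp add: sum_distrib_left)
  also have "\<dots> = -2 * of_int (sv v) * ptilde f v" by (simp only: sum_ptilde)
  finally show ?thesis .
qed

lemma sndU:
  assumes hB: "\<And>k. k \<in> {1..8} \<Longrightarrow> snd (xs k) = bzero"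
  shows "set w \<subseteq> {1..8} \<Longrightarrow> snd (dprod xs w) = bzero"
proof (induction w)
  case Nil then show ?case by (simp add: dunit_def)
next
  case (Cons k w)
  have "badd bzero bzero = bzero" by (simp add: badd_def bzero_def)
  with Cons show ?case by (simp add: dmul_def hB bmul_zero_left bmul_zero_right)
qed

lemma sndU_deval:
  assumes hB: "\<And>k. k \<in> {1..8} \<Longrightarrow> snd (xs k) = bzero"
  shows "snd (deval f xs) = bzero"
  unfolding deval_def snd_conv
proof (rule ext)
  fix m :: mon
  have "(\<Sum>w\<in>words (length (snd m) + 1). f w * snd (dprod xs w) m) = 0"
  proof (rule sum.neutral, rule ballI)
    fix w assume "w \<in> words (length (snd m) + 1)"
    then have sw: "set w \<subseteq> {1..8}" by (rule words_sub)
    show "f w * snd (dprod xs w) m = 0" using sndU[OF hB sw] by (simp add: bzero_def)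
  qed
  then show "(\<Sum>w\<in>words (length (snd m) + 1). f w * snd (dprod xs w) m) = bzero m" by (simp add: bzero_def)
qed



lemma sv_step: "sv (u @ a # a # x) = sv (u @ x)"
  by (induction u) (simp_all add: minus_one_power_iff)

lemma redstep_sv: "redstep w w' \<Longrightarrow> sv w = sv w'"
  by (induction rule: redstep.induct) (simp add: sv_step)

lemma redstep_set: "redstep w w' \<Longrightarrow> set w' \<subseteq> set w"
  by (induction rule: redstep.induct) auto

lemma rtr_sv: "redstep\<^sup>*\<^sup>* w w' \<Longrightarrow> sv w = sv w'"
  by (induction rule: rtranclp_induct) (auto dest: redstep_sv)

lemma rtr_set: "redstep\<^sup>*\<^sup>* w w' \<Longrightarrow> set w' \<subseteq> set w"
  by (induction rule: rtranclp_induct) (auto dest: redstep_set)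

fun nadj :: "nat list \<Rightarrow> bool" where
  "nadj (a#b#x) = (a \<noteq> b \<and> nadj (b#x))"
| "nadj _ = True"

lemma not_nadj: "\<not> nadj v \<Longrightarrow> \<exists>u x a. v = u @ [a,a] @ x \<and> a \<in> set v"
proof (induction v rule: nadj.induct)
  case (1 a b x)
  show ?case
  proof (cases "a = b")
    case True
    then show ?thesis by (rule_tac x="[]" in exI) auto
  next
    case False
    with 1 obtain u y c where "b#x = u @ [c,c] @ y" "c \<in> set (b#x)" by auto
    then show ?thesis by (rule_tac x="a#u" in exI) auto
  qed
qed auto

lemma red_props:
  shows "redstep\<^sup>*\<^sup>* w (red w) \<and> (\<forall>u. redstep\<^sup>*\<^sup>* w u \<longrightarrow> length (red w) \<le> length u)"
proof -
  have "\<exists>v. redstep\<^sup>*\<^sup>* w v \<and> (\<forall>u. redstep\<^sup>*\<^sup>* w u \<longrightarrow> length v \<le> length u)"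
    by (rule ex_has_least_nat[of "\<lambda>v. redstep\<^sup>*\<^sup>* w v" w length]) simp
  then show ?thesis unfolding red_def by (rule someI_ex)
qed

lemma red_nadj: assumes "set w \<subseteq> {1,2}" shows "nadj (red w)"
proof (rule ccontr)
  assume "\<not> nadj (red w)"
  then obtain u x a where ua: "red w = u @ [a,a] @ x" "a \<in> set (red w)" using not_nadj by blast
  have "set (red w) \<subseteq> {1,2}" using rtr_set red_props assms by blast
  with ua have "a \<in> {1,2}" by auto
  then have "redstep (red w) (u @ x)" unfolding ua(1) by (rule redstep.intros)
  then have "redstep\<^sup>*\<^sup>* w (u @ x)" using red_props by (meson rtranclp.rtrancl_into_rtrancl)
  then have "length (red w) \<le> length (u @ x)" using red_props by blast
  then show False using ua(1) by simp
qed

lemma alt_parity: "set v \<subseteq> {1,2} \<Longrightarrow> nadj v \<Longrightarrow> v \<noteq> [] \<Longrightarrow> (hd v = last v \<longleftrightarrow> odd (length v))"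
proof (induction v rule: nadj.induct)
  case (1 a b x)
  have sx: "set x \<subseteq> {1,2}" using 1 by auto
  have "x \<noteq> [] \<Longrightarrow> last x \<in> {1,2}" using sx last_in_set[of x] by blast
  then show ?case using 1 by auto
qed auto

lemma alt_sv: "set v \<subseteq> {1,2} \<Longrightarrow> nadj v \<Longrightarrow> v \<noteq> [] \<Longrightarrow>
   sv v = (if last v = 1 then int ((length v + 1) div 2) else - int (length v div 2))"
proof (induction v rule: nadj.induct)
  case (1 a b x)
  let ?v = "b#x"
  have IH: "sv ?v = (if last ?v = 1 then int ((length ?v + 1) div 2) else - int (length ?v div 2))"
    using 1 by auto
  have par: "hd ?v = last ?v \<longleftrightarrow> odd (length ?v)" using 1 alt_parity[of ?v] by auto
  have ab: "a \<noteq> b" "a \<in> {1,2}" "b \<in> {1,2}" using 1 by auto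
  have sx: "set x \<subseteq> {1,2}" using 1 by auto
  have lx: "x \<noteq> [] \<Longrightarrow> last x \<in> {1,2}" using sx last_in_set[of x] by blast
  show ?case
    using IH par ab lx by (cases "even (length x)") (auto simp: minus_one_power_iff)
next
  case ("2_2" a)
  then show ?case by auto
qed auto

lemma sv_ne0: assumes "set w \<subseteq> {1,2}" "red w \<notin> {[], [2]}" shows "sv w \<noteq> 0"
proof -
  let ?v = "red w"
  have sv: "sv w = sv ?v" using rtr_sv red_props by blast
  have set: "set ?v \<subseteq> {1,2}" using rtr_set red_props assms(1) by blast
  have na: "nadj ?v" using red_nadj assms(1) .
  have ne: "?v \<noteq> []" using assms(2) by auto
  show ?thesis
  proof
    assume "sv w = 0"
    then have z: "sv ?v = 0" using sv by simp
    show False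
    proof (cases "last ?v = 1")
      case True
      then have "(length ?v + 1) div 2 = 0" using z alt_sv[OF set na ne] by simp
      moreover have "length ?v \<ge> 1" using ne by (cases ?v) auto
      ultimately show False by presburger
    next
      case False
      then have "length ?v div 2 = 0" using z alt_sv[OF set na ne] by simp
      moreover have "length ?v \<ge> 1" using ne by (cases ?v) auto
      ultimately have "length ?v = 1" by presburger
      then obtain a where a: "?v = [a]" by (cases ?v) auto
      then have "a \<noteq> 1" using False by simp
      then have "a = 2" using set a by auto
      then show False using a assms(2) by simp
    qed
  qed
qed

lemma sv_ne1: assumes "set w \<subseteq> {1,2}" "red w \<notin> {[], [2]}" "red w \<notin> {[1], [2,1]}" shows "sv w \<noteq> 1"
proof -
  let ?v = "red w"
  have sv: "sv w = sv ?v" using rtr_sv red_props by blast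
  have set: "set ?v \<subseteq> {1,2}" using rtr_set red_props assms(1) by blast
  have na: "nadj ?v" using red_nadj assms(1) .
  have ne: "?v \<noteq> []" using assms(2) by auto
  show ?thesis
  proof
    assume "sv w = 1"
    then have z: "sv ?v = 1" using sv by simp
    show False
    proof (cases "last ?v = 1")
      case False
      then show False using z alt_sv[OF set na ne] by simp
    next
      case True
      then have "(length ?v + 1) div 2 = 1" using z alt_sv[OF set na ne] by simp
      then have "length ?v = 1 \<or> length ?v = 2" by auto
      then show False
      proof
        assume "length ?v = 1"
        then obtain a where a: "?v = [a]" by (cases ?v) auto
        then show False using True assms(3) by simp
      next
        assume "length ?v = 2"
        then obtain a b where a: "?v = [a,b]" by (cases ?v; cases "tl ?v") auto
        then have "b = 1" "a \<noteq> b" using True na by auto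
        then have "a = 2" using set a by auto
        then show False using a \<open>b = 1\<close> assms(3) by simp
      qed
    qed
  qed
qed


definition xsR :: "nat \<Rightarrow> del" where
  "xsR = splitvar (bQ1,bQ2) (bQ2, bscale (-1) bQ1) (bR1,bR2) (bR2, bscale (-1) bR1)"
definition xsU :: "nat \<Rightarrow> del" where
  "xsU = splitvar (bQ1,bzero) (bQ2,bzero) (bR1,bzero) (bR2,bzero)"

lemma xsR_A: "k \<in> {1..8} \<Longrightarrow> fst (xsR k) = deg1 (tabA k)" by (simp add: xsR_def svR)
lemma xsR_B: "k \<in> {1..8} \<Longrightarrow> snd (xsR k) = deg1 (tabB k)" by (simp add: xsR_def svR)
lemma xsU_A: "k \<in> {1..8} \<Longrightarrow> fst (xsU k) = deg1 (tabA k)" by (simp add: xsU_def svU)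
lemma xsU_B: "k \<in> {1..8} \<Longrightarrow> snd (xsU k) = bzero" by (simp add: xsU_def svU)

lemma Q1D_eq: "Q1D = (bQ1, bzero)" by (simp add: Q1D_def demb_def)
lemma Q2D_eq: "Q2D = (bQ2, bzero)" by (simp add: Q2D_def demb_def)

lemma rotR1': "dsub (fst (Rot (A1D, A2D))) (bQ1, bQ2) = (bR1, bR2)" using rotR1 rotQ1 by simp
lemma rotR2': "dsub (snd (Rot (A1D, A2D))) (bQ2, bscale (-1) bQ1) = (bR2, bscale (-1) bR1)" using rotR2 rotQ2 by simp
lemma unR1': "dsub A1D (bQ1, bzero) = (bR1, bzero)" using unR1 Q1D_eq by simp
lemma unR2': "dsub A2D (bQ2, bzero) = (bR2, bzero)" using unR2 Q2D_eq by simp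

lemmas rotall = rotQ1 rotQ2 rotR1' rotR2' Q1D_eq Q2D_eq unR1' unR2'

lemma Rm_basis0: "Rm d (bbasis (c,[])) = bscale (fst (qmul c d)) (bbasis (snd (qmul c d), []))"
proof (rule ext)
  fix m :: mon
  obtain c0 l where m: "m = (c0, l)" by (cases m)
  show "Rm d (bbasis (c,[])) m = bscale (fst (qmul c d)) (bbasis (snd (qmul c d), [])) m"
  proof (cases l)
    case Nil
    then show ?thesis unfolding m by (cases c; cases d; cases c0) (simp_all add: Rm_def slot_def pre_def bscale_def bbasis_def)
  next
    case (Cons p l')
    then show ?thesis unfolding m by (simp add: Rm_def slot_def pre_def bscale_def bbasis_def)
  qed
qed

lemma Phi_bscale: "Phi v c (bscale a x) = a * Phi v c x"
  unfolding bscale_def by (rule Phi_scale)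

lemma bscale_one: "bscale 1 x = x" by (simp add: bscale_def)

lemma QQ1: "bmul bQ1 bQ2 = bbasis (K,[])"
  by (simp add: bQ1_def bQ2_def bmul_basis_right Rm_basis0 bscale_one)

lemma QQ2: "badd (bmul bQ1 (bscale (-1) bQ1)) (bmul bQ2 bQ2) = bzero"
  by (simp add: bQ1_def bQ2_def bmul_scale_right bmul_basis_right Rm_basis0) (rule ext, simp add: badd_def bscale_def bzero_def bbasis_def)

lemma QQ2b: "badd (bscale (-1) (bmul bQ1 bQ1)) (bmul bQ2 bQ2) = bzero"
  using QQ2 by (simp add: bmul_scale_right)

lemma QQ3: "badd (bmul bQ1 bzero) (bmul bzero bQ2) = bzero"
  by (simp add: bmul_zero_left bmul_zero_right) (simp add: badd_def bzero_def)

lemma badd_zz: "badd bzero bzero = bzero" by (simp add: badd_def bzero_def)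

lemmas phisimps = badd_zz Phi_badd Phi_bzero Phi_bscale bmul_zero_left bmul_zero_right bmul_one_left
  bmul_scale_right Phi_Rm sum4

lemma scalar_case:
  assumes OI: "OI_scalar f" and v: "set v \<subseteq> {1,2}"
  shows "of_int (sv v) * ptilde f v = 0"
proof -
  have eq: "deval f xsU = deval f xsR"
    using OI unfolding OI_scalar_def scal_eval_def rotQ1 rotQ2 unfolding rotR1' rotR2' Q1D_eq Q2D_eq
    unfolding unR1' unR2' xsR_def[symmetric] xsU_def[symmetric] .
  have sU: "snd (deval f xsU) = bzero" by (rule sndU_deval) (rule xsU_B)
  have "0 = Phi v K (snd (deval f xsU))" by (simp only: sU Phi_bzero)
  also have "\<dots> = Phi v K (snd (deval f xsR))" by (simp only: eq)
  also have "\<dots> = -2 * of_int (sv v) * ptilde f v" by (rule PhiS[OF xsR_A xsR_B v])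
  finally show ?thesis by simp
qed

lemma pseudo_case:
  assumes OI: "OI_pseudo f" and v: "set v \<subseteq> {1,2}"
  shows "of_int (sv v) * ptilde f v = 0"
proof -
  have eq: "dmul (deval f xsU) (dmul (bQ1, bzero) (bQ2, bzero)) = dmul (deval f xsR) (dmul (bQ1, bQ2) (bQ2, bscale (-1) bQ1))"
    using OI unfolding OI_pseudo_def pseudo_eval_def rotQ1 rotQ2 unfolding rotR1' rotR2' Q1D_eq Q2D_eq
    unfolding unR1' unR2' xsR_def[symmetric] xsU_def[symmetric] .
  then have eq2: "snd (dmul (deval f xsU) (dmul (bQ1, bzero) (bQ2, bzero))) = snd (dmul (deval f xsR) (dmul (bQ1, bQ2) (bQ2, bscale (-1) bQ1)))"
    by simp
  have sU: "snd (deval f xsU) = bzero" by (rule sndU_deval) (rule xsU_B)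
  have "0 = Phi v E (snd (dmul (deval f xsU) (dmul (bQ1, bzero) (bQ2, bzero))))"
    by (simp add: dmul_def QQ1 QQ3 sU phisimps)
  also have "\<dots> = Phi v E (snd (dmul (deval f xsR) (dmul (bQ1, bQ2) (bQ2, bscale (-1) bQ1))))"
    by (simp only: eq2)
  also have "\<dots> = - Phi v K (snd (deval f xsR))"
    by (simp add: dmul_def QQ1 QQ2b bmul_basis_right phisimps)
  also have "\<dots> = 2 * of_int (sv v) * ptilde f v" using PhiS[OF xsR_A xsR_B v, of f] by simp
  finally show ?thesis by simp
qed

lemma vect_case:
  assumes OI: "OI_vect f1 f2" and v: "set v \<subseteq> {1,2}"
  shows "ptilde f2 v = ptilde f1 v - 2 * of_int (sv v) * ptilde f1 v"
    and "- ptilde f1 v = - ptilde f2 v + 2 * of_int (sv v) * ptilde f2 v"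
proof -
  have eq: "Rot (dmul (deval f1 xsU) (bQ1, bzero), dmul (deval f2 xsU) (bQ2, bzero)) =
      (dmul (deval f1 xsR) (bQ1, bQ2), dmul (deval f2 xsR) (bQ2, bscale (-1) bQ1))"
    using OI unfolding OI_vect_def vect_eval_def rotQ1 rotQ2 unfolding rotR1' rotR2' Q1D_eq Q2D_eq
    unfolding unR1' unR2' xsR_def[symmetric] xsU_def[symmetric] .
  have sU1: "snd (deval f1 xsU) = bzero" by (rule sndU_deval) (rule xsU_B)
  have sU2: "snd (deval f2 xsU) = bzero" by (rule sndU_deval) (rule xsU_B)
  have FU1: "Phi v E (fst (deval f1 xsU)) = ptilde f1 v" by (rule PhiF[OF xsU_A v])
  have FU2: "Phi v E (fst (deval f2 xsU)) = ptilde f2 v" by (rule PhiF[OF xsU_A v])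
  have FR1: "Phi v E (fst (deval f1 xsR)) = ptilde f1 v" by (rule PhiF[OF xsR_A v])
  have FR2: "Phi v E (fst (deval f2 xsR)) = ptilde f2 v" by (rule PhiF[OF xsR_A v])
  have SR1: "Phi v K (snd (deval f1 xsR)) = -2 * of_int (sv v) * ptilde f1 v" by (rule PhiS[OF xsR_A xsR_B v])
  have SR2: "Phi v K (snd (deval f2 xsR)) = -2 * of_int (sv v) * ptilde f2 v" by (rule PhiS[OF xsR_A xsR_B v])
  from eq have e1: "Phi v J (snd (fst (Rot (dmul (deval f1 xsU) (bQ1, bzero), dmul (deval f2 xsU) (bQ2, bzero))))) =
      Phi v J (snd (dmul (deval f1 xsR) (bQ1, bQ2)))" by simp
  have l1: "Phi v J (snd (fst (Rot (dmul (deval f1 xsU) (bQ1, bzero), dmul (deval f2 xsU) (bQ2, bzero))))) = ptilde f2 v"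
    by (simp add: Rot_def dadd_def dmul_def tt_def sU1 FU2 bQ1_def bQ2_def bmul_basis_right phisimps)
  have r1: "Phi v J (snd (dmul (deval f1 xsR) (bQ1, bQ2))) = ptilde f1 v + (-2 * of_int (sv v) * ptilde f1 v)"
    by (simp add: dmul_def FR1 SR1 bQ1_def bQ2_def bmul_basis_right phisimps)
  from e1 l1 r1 show "ptilde f2 v = ptilde f1 v - 2 * of_int (sv v) * ptilde f1 v" by simp
  from eq have e2: "Phi v I (snd (snd (Rot (dmul (deval f1 xsU) (bQ1, bzero), dmul (deval f2 xsU) (bQ2, bzero))))) =
      Phi v I (snd (dmul (deval f2 xsR) (bQ2, bscale (-1) bQ1)))" by simp
  have l2: "Phi v I (snd (snd (Rot (dmul (deval f1 xsU) (bQ1, bzero), dmul (deval f2 xsU) (bQ2, bzero))))) = - ptilde f1 v"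
    by (simp add: Rot_def dadd_def dsub_def dneg_def dscale_def dmul_def tt_def sU2 FU1 bQ1_def bQ2_def bmul_basis_right phisimps)
  have r2: "Phi v I (snd (dmul (deval f2 xsR) (bQ2, bscale (-1) bQ1))) = - ptilde f2 v + 2 * of_int (sv v) * ptilde f2 v"
    by (simp add: dmul_def FR2 SR2 bQ1_def bQ2_def bmul_basis_right phisimps)
  from e2 l2 r2 show "- ptilde f1 v = - ptilde f2 v + 2 * of_int (sv v) * ptilde f2 v" by simp
qed

theorem mainTheorem2:
  fixes f0 f1 f2 f12 :: series and \<iota> :: "nat list"
  assumes "set \<iota> \<subseteq> {1, 2}"
    and "red \<iota> \<notin> {[], [2]}"
  shows "(OI_scalar f0 \<longrightarrow> ptilde f0 \<iota> = 0)
       \<and> (OI_pseudo f12 \<longrightarrow> ptilde f12 \<iota> = 0)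
       \<and> (OI_vect f1 f2 \<and> red \<iota> \<notin> {[1], [2, 1]} \<longrightarrow> ptilde f1 \<iota> = 0 \<and> ptilde f2 \<iota> = 0)"
proof (intro conjI impI)
  have s0: "sv \<iota> \<noteq> 0" by (rule sv_ne0[OF assms])
  then have s0r: "(of_int (sv \<iota>) :: real) \<noteq> 0" by simp
  show "ptilde f0 \<iota> = 0" if "OI_scalar f0"
    using scalar_case[OF that assms(1)] s0r by simp
  show "ptilde f12 \<iota> = 0" if "OI_pseudo f12"
    using pseudo_case[OF that assms(1)] s0r by simp
  assume H: "OI_vect f1 f2 \<and> red \<iota> \<notin> {[1], [2, 1]}"
  have s1: "sv \<iota> \<noteq> 1" using sv_ne1[OF assms] H by blast
  then have s1r: "(of_int (sv \<iota>) :: real) \<noteq> 1" by simp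
  define s :: real where "s = of_int (sv \<iota>)"
  define p1 where "p1 = ptilde f1 \<iota>"
  define p2 where "p2 = ptilde f2 \<iota>"
  have e1: "p2 = p1 - 2 * s * p1" using vect_case(1)[OF conjunct1[OF H] assms(1)] unfolding s_def p1_def p2_def .
  have e2: "- p1 = - p2 + 2 * s * p2" using vect_case(2)[OF conjunct1[OF H] assms(1)] unfolding s_def p1_def p2_def .
  have "p1 * (s * (1 - s)) = 0" using e1 e2 by algebra
  moreover have "s * (1 - s) \<noteq> 0" using s0r s1r unfolding s_def by simp
  ultimately have "p1 = 0" by simp
  then show "ptilde f1 \<iota> = 0" unfolding p1_def .
  from e1 \<open>p1 = 0\<close> show "ptilde f2 \<iota> = 0" unfolding p2_def by simp
qed


end
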